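(* Let $\mathcal{C}$ be a quasicategory. Then $\mathrm{Ex}\,\mathcal{C}$ is a Kan complex if and only if $\mathcal{C}^\sharp$ satisfies calculus of left fractions (CLF).
   Context: $\mathrm{Ex}$ is Kan's functor: $(\mathrm{Ex}\,X)_n=\mathrm{Hom}(\mathrm{sd}\,\Delta^n, X)$ where $\mathrm{sd}\,\Delta^n$ is the nerve of the poset of non-empty subsets of $[n]=\{0,\dots,n\}$ ordered by inclusion. $\mathcal{C}^\sharp$ denotes $\mathcal{C}$ with all $1$-simplices marked. A marked simplicial set is a pair $(X,W)$ with $W\subseteq X_1$ containing the degenerate $1$-simplices. For $n\ge 0$, $0\le k\le n$, $\mathrm{L}^n_k$ is the nerve of the poset of subsets $A\subseteq[n]$ with $k\in A$ ordered by inclusion, where $A_0\subseteq A_1$ is marked iff $\max A_0=\max A_1$; $\mathrm{LJ}^n_k\subseteq \mathrm{L}^n_k$ is the maximal simplicial subset not containing the vertex $[n]$. $W$ is weakly closed under composition if every map $\Lambda^2_1\to X$ with both edges marked extends to a $2$-simplex all of whose edges are marked. A marked quasicategory $(\mathcal{C},W)$ satisfies CLF if $W$ is weakly closed under composition and $(\mathcal{C},W)$ has the right lifting property (in marked simplicial sets) against all $\mathrm{LJ}^n_k\hookrightarrow\mathrm{L}^n_k$ with $n\ge2$, $0<k\le n$. *)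

theory Defs
  imports "HOL-Library.FuncSet"
begin

text \<open>A simplicial set with cells of type 'a: the set of n-simplices, and the
action of a simplicial operator f : [m] -> [n] (monotone) sending n-simplices
to m-simplices, written sact X m n f x.\<close>

record 'a sset =
  cells :: "nat \<Rightarrow> 'a set"
  sact  :: "nat \<Rightarrow> nat \<Rightarrow> (nat \<Rightarrow> nat) \<Rightarrow> 'a \<Rightarrow> 'a"

definition simp_op :: "nat \<Rightarrow> nat \<Rightarrow> (nat \<Rightarrow> nat) \<Rightarrow> bool" where
  "simp_op m n f \<longleftrightarrow> (\<forall>i\<in>{0..m}. f i \<le> n) \<and> (\<forall>i j. i \<le> j \<longrightarrow> j \<le> m \<longrightarrow> f i \<le> f j)"

definition is_sset :: "'a sset \<Rightarrow> bool" where
  "is_sset X \<longleftrightarrow>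
     (\<forall>m n f x. simp_op m n f \<longrightarrow> x \<in> cells X n \<longrightarrow> sact X m n f x \<in> cells X m) \<and>
     (\<forall>m n f g x. simp_op m n f \<longrightarrow> (\<forall>i\<in>{0..m}. f i = g i) \<longrightarrow> x \<in> cells X n
         \<longrightarrow> sact X m n f x = sact X m n g x) \<and>
     (\<forall>n x. x \<in> cells X n \<longrightarrow> sact X n n (\<lambda>i. i) x = x) \<and>
     (\<forall>k m n g f x. simp_op k m g \<longrightarrow> simp_op m n f \<longrightarrow> x \<in> cells X n
         \<longrightarrow> sact X k m g (sact X m n f x) = sact X k n (f \<circ> g) x)"

definition smap :: "'a sset \<Rightarrow> 'b sset \<Rightarrow> (nat \<Rightarrow> 'a \<Rightarrow> 'b) \<Rightarrow> bool" where
  "smap X Y F \<longleftrightarrow>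
     (\<forall>n x. x \<in> cells X n \<longrightarrow> F n x \<in> cells Y n) \<and>
     (\<forall>m n f x. simp_op m n f \<longrightarrow> x \<in> cells X n
         \<longrightarrow> F m (sact X m n f x) = sact Y m n f (F n x))"

definition ssub :: "'a sset \<Rightarrow> (nat \<Rightarrow> 'a set) \<Rightarrow> 'a sset" where
  "ssub X S = \<lparr>cells = S, sact = sact X\<rparr>"

definition nerve :: "'p set \<Rightarrow> ('p \<Rightarrow> 'p \<Rightarrow> bool) \<Rightarrow> (nat \<Rightarrow> 'p) sset" where
  "nerve P le = \<lparr>cells = (\<lambda>n. {\<sigma> \<in> extensional {0..n}. (\<forall>i\<in>{0..n}. \<sigma> i \<in> P) \<and>
                                  (\<forall>i j. i \<le> j \<longrightarrow> j \<le> n \<longrightarrow> le (\<sigma> i) (\<sigma> j))}),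
                 sact = (\<lambda>m n f \<sigma>. restrict (\<sigma> \<circ> f) {0..m})\<rparr>"

definition simplex :: "nat \<Rightarrow> (nat \<Rightarrow> nat) sset" ("\<Delta>") where
  "\<Delta> n = nerve {0..n} (\<le>)"

text \<open>Horn \<Lambda>^n_k: simplices of \<Delta>^n not containing all of [n] - {k} in their image
together with k, i.e. not hitting every face except the k-th.\<close>

definition horn :: "nat \<Rightarrow> nat \<Rightarrow> (nat \<Rightarrow> nat) sset" where
  "horn n k = ssub (\<Delta> n) (\<lambda>m. {\<sigma> \<in> cells (\<Delta> n) m. insert k (\<sigma> ` {0..m}) \<noteq> {0..n}})"

definition extends_along :: "'b sset \<Rightarrow> 'b sset \<Rightarrow> 'a sset \<Rightarrow> bool" where
  "extends_along A B X \<longleftrightarrow>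
     (\<forall>g. smap A X g \<longrightarrow> (\<exists>G. smap B X G \<and> (\<forall>m x. x \<in> cells A m \<longrightarrow> G m x = g m x)))"

definition kan_complex :: "'a sset \<Rightarrow> bool" where
  "kan_complex X \<longleftrightarrow> is_sset X \<and>
     (\<forall>n k. 1 \<le> n \<longrightarrow> k \<le> n \<longrightarrow> extends_along (horn n k) (\<Delta> n) X)"

definition quasicategory :: "'a sset \<Rightarrow> bool" where
  "quasicategory X \<longleftrightarrow> is_sset X \<and>
     (\<forall>n k. 0 < k \<longrightarrow> k < n \<longrightarrow> extends_along (horn n k) (\<Delta> n) X)"

definition sd :: "nat \<Rightarrow> (nat \<Rightarrow> nat set) sset" where
  "sd n = nerve {S. S \<noteq> {} \<and> S \<subseteq> {0..n}} (\<subseteq>)"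

text \<open>(Ex X)_n = Hom(sd \<Delta>^n, X) (maps taken extensionally); a simplicial operator
f : [m] -> [n] acts by precomposition with sd(f) : S \<mapsto> f ` S.\<close>

definition Ex :: "'a sset \<Rightarrow> (nat \<Rightarrow> (nat \<Rightarrow> nat set) \<Rightarrow> 'a) sset" where
  "Ex X = \<lparr>cells = (\<lambda>n. {F. smap (sd n) X F \<and>
                           (\<forall>k \<sigma>. \<sigma> \<notin> cells (sd n) k \<longrightarrow> F k \<sigma> = undefined)}),
           sact = (\<lambda>m n f F. (\<lambda>k \<sigma>. if \<sigma> \<in> cells (sd m) k
                                   then F k (restrict (\<lambda>i. f ` \<sigma> i) {0..k}) else undefined))\<rparr>"

type_synonym 'a msset = "'a sset \<times> 'a set"

definition is_msset :: "'a msset \<Rightarrow> bool" where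
  "is_msset XW \<longleftrightarrow> is_sset (fst XW) \<and> snd XW \<subseteq> cells (fst XW) 1 \<and>
     (\<forall>x\<in>cells (fst XW) 0. sact (fst XW) 1 0 (\<lambda>_. 0) x \<in> snd XW)"

definition mmap :: "'a msset \<Rightarrow> 'b msset \<Rightarrow> (nat \<Rightarrow> 'a \<Rightarrow> 'b) \<Rightarrow> bool" where
  "mmap A B F \<longleftrightarrow> smap (fst A) (fst B) F \<and> (\<forall>e\<in>snd A. F 1 e \<in> snd B)"

definition sharp :: "'a sset \<Rightarrow> 'a msset" where
  "sharp X = (X, cells X 1)"

definition Lmk :: "nat \<Rightarrow> nat \<Rightarrow> (nat \<Rightarrow> nat set) msset" where
  "Lmk n k = (let N = nerve {A. A \<subseteq> {0..n} \<and> k \<in> A} (\<subseteq>)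
              in (N, {\<sigma> \<in> cells N 1. Max (\<sigma> 0) = Max (\<sigma> 1)}))"

definition LJmk :: "nat \<Rightarrow> nat \<Rightarrow> (nat \<Rightarrow> nat set) msset" where
  "LJmk n k = (let S = (\<lambda>m. {\<sigma> \<in> cells (fst (Lmk n k)) m. {0..n} \<notin> \<sigma> ` {0..m}})
               in (ssub (fst (Lmk n k)) S, snd (Lmk n k) \<inter> S 1))"

definition weakly_closed_comp :: "'a msset \<Rightarrow> bool" where
  "weakly_closed_comp XW \<longleftrightarrow>
     (\<forall>h. smap (horn 2 1) (fst XW) h \<longrightarrow>
          (\<forall>e\<in>cells (horn 2 1) 1. h 1 e \<in> snd XW) \<longrightarrow>
          (\<exists>G. smap (\<Delta> 2) (fst XW) G \<and> (\<forall>m x. x \<in> cells (horn 2 1) m \<longrightarrow> G m x = h m x)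
               \<and> (\<forall>e\<in>cells (\<Delta> 2) 1. G 1 e \<in> snd XW)))"

definition mrlp :: "'b msset \<Rightarrow> 'b msset \<Rightarrow> 'a msset \<Rightarrow> bool" where
  "mrlp A B XW \<longleftrightarrow>
     (\<forall>g. mmap A XW g \<longrightarrow> (\<exists>G. mmap B XW G \<and> (\<forall>m x. x \<in> cells (fst A) m \<longrightarrow> G m x = g m x)))"

definition CLF :: "'a msset \<Rightarrow> bool" where
  "CLF XW \<longleftrightarrow> weakly_closed_comp XW \<and>
     (\<forall>n k. 2 \<le> n \<longrightarrow> 0 < k \<longrightarrow> k \<le> n \<longrightarrow> mrlp (LJmk n k) (Lmk n k) XW)"

end

theory Submission
  imports Defs
begin

definition NK :: "('p \<Rightarrow> 'p \<Rightarrow> bool) \<Rightarrow> 'p set set \<Rightarrow> (nat \<Rightarrow> 'p) sset" where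
  "NK le K = ssub (nerve UNIV le) (\<lambda>m. {\<sigma> \<in> cells (nerve UNIV le) m. \<sigma> ` {0..m} \<in> K})"

lemma NK_cells: "\<sigma> \<in> cells (NK le K) m \<longleftrightarrow> \<sigma> \<in> extensional {0..m} \<and>
   (\<forall>i j. i \<le> j \<longrightarrow> j \<le> m \<longrightarrow> le (\<sigma> i) (\<sigma> j)) \<and> \<sigma> ` {0..m} \<in> K"
  by (auto simp: NK_def ssub_def nerve_def)

lemma NK_sact[simp]: "sact (NK le K) m n f \<sigma> = restrict (\<sigma> \<circ> f) {0..m}"
  by (simp add: NK_def ssub_def nerve_def)

lemma nerve_NK: "nerve P le = NK le (Pow P)"
  unfolding NK_def ssub_def nerve_def by (auto simp: fun_eq_iff image_subset_iff)

lemma Delta_NK: "\<Delta> n = NK (\<le>) (Pow {0..n})"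
  by (simp add: simplex_def nerve_NK)

lemma sd_NK: "sd n = NK (\<subseteq>) (Pow {S. S \<noteq> {} \<and> S \<subseteq> {0..n}})"
  by (simp add: sd_def nerve_NK)

lemma horn_NK: "horn n k = NK (\<le>) {Y. Y \<subseteq> {0..n} \<and> insert k Y \<noteq> {0..n}}"
  by (auto simp: horn_def Delta_NK NK_def ssub_def nerve_def)

lemma smap_NK: "smap (NK le K) C G \<longleftrightarrow>
   (\<forall>m \<sigma>. \<sigma> \<in> cells (NK le K) m \<longrightarrow> G m \<sigma> \<in> cells C m) \<and>
   (\<forall>m n f \<sigma>. simp_op m n f \<longrightarrow> \<sigma> \<in> cells (NK le K) n \<longrightarrow>
        G m (restrict (\<sigma> \<circ> f) {0..m}) = sact C m n f (G n \<sigma>))"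
  by (simp add: smap_def)

lemma NK_cells_sact:
  assumes "\<sigma> \<in> cells (NK le K) n" "simp_op m n f" "\<forall>Y\<in>K. \<forall>Z\<subseteq>Y. Z \<in> K"
  shows "restrict (\<sigma> \<circ> f) {0..m} \<in> cells (NK le K) m"
proof -
  have img: "restrict (\<sigma> \<circ> f) {0..m} ` {0..m} \<subseteq> \<sigma> ` {0..n}"
    using assms(2) by (auto simp: simp_op_def)
  show ?thesis using assms img unfolding NK_cells simp_op_def
    by (auto simp: image_subset_iff)
qed

lemma smap_pb:
  assumes G: "smap (NK le2 K2) C G"
    and K: "\<forall>Y\<in>K1. p ` Y \<in> K2"
    and mono: "\<forall>Y\<in>K1. \<forall>a\<in>Y. \<forall>b\<in>Y. le1 a b \<longrightarrow> le2 (p a) (p b)"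
  shows "smap (NK le1 K1) C (\<lambda>m \<sigma>. G m (restrict (p \<circ> \<sigma>) {0..m}))"
proof -
  have cell: "restrict (p \<circ> \<sigma>) {0..m} \<in> cells (NK le2 K2) m" if "\<sigma> \<in> cells (NK le1 K1) m" for \<sigma> m
  proof -
    have "restrict (p \<circ> \<sigma>) {0..m} ` {0..m} = p ` (\<sigma> ` {0..m})" by auto
    then show ?thesis using that K mono unfolding NK_cells by auto
  qed
  show ?thesis unfolding smap_NK
  proof (intro conjI allI impI)
    fix m \<sigma> assume "\<sigma> \<in> cells (NK le1 K1) m"
    then show "G m (restrict (p \<circ> \<sigma>) {0..m}) \<in> cells C m"
      using G cell unfolding smap_NK by blast
  next
    fix m n f \<sigma> assume f: "simp_op m n f" and s: "\<sigma> \<in> cells (NK le1 K1) n"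
    have eq: "restrict (p \<circ> restrict (\<sigma> \<circ> f) {0..m}) {0..m} = restrict (restrict (p \<circ> \<sigma>) {0..n} \<circ> f) {0..m}"
      using f by (auto simp: simp_op_def restrict_def fun_eq_iff)
    show "G m (restrict (p \<circ> restrict (\<sigma> \<circ> f) {0..m}) {0..m}) = sact C m n f (G n (restrict (p \<circ> \<sigma>) {0..n}))"
      unfolding eq using G cell[OF s] f unfolding smap_NK by blast
  qed
qed

lemma smap_cong:
  assumes "smap X C G" "\<forall>m \<sigma>. \<sigma> \<in> cells X m \<longrightarrow> G' m \<sigma> = G m \<sigma>"
    "\<forall>m n f \<sigma>. simp_op m n f \<longrightarrow> \<sigma> \<in> cells X n \<longrightarrow> sact X m n f \<sigma> \<in> cells X m"
  shows "smap X C G'"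
  using assms unfolding smap_def by metis

lemma smap_sub:
  assumes "smap (NK le K) C G" "K' \<subseteq> K"
  shows "smap (NK le K') C G"
  using assms unfolding smap_NK NK_cells by blast


lemma Ex_cells: "F \<in> cells (Ex C) n \<longleftrightarrow> smap (sd n) C F \<and> (\<forall>k \<sigma>. \<sigma> \<notin> cells (sd n) k \<longrightarrow> F k \<sigma> = undefined)"
  by (simp add: Ex_def)

lemma Ex_sact: "sact (Ex C) m n f F = (\<lambda>k \<sigma>. if \<sigma> \<in> cells (sd m) k
      then F k (restrict ((`) f \<circ> \<sigma>) {0..k}) else undefined)"
  apply (simp add: Ex_def)
  apply (rule ext)+
  apply (simp add: comp_def)
  done

lemma sd_cells: "\<tau> \<in> cells (sd m) l \<longleftrightarrow> \<tau> \<in> extensional {0..l} \<and>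
   (\<forall>i j. i \<le> j \<longrightarrow> j \<le> l \<longrightarrow> \<tau> i \<subseteq> \<tau> j) \<and> (\<forall>i\<in>{0..l}. \<tau> i \<noteq> {} \<and> \<tau> i \<subseteq> {0..m})"
  unfolding sd_NK NK_cells by auto

lemma down_Pow: "\<forall>Y\<in>Pow A. \<forall>Z\<subseteq>Y. Z \<in> Pow A" by auto

lemma sd_sact[simp]: "sact (sd N) m n f \<sigma> = restrict (\<sigma> \<circ> f) {0..m}"
  by (simp add: sd_NK)

lemma sd_sact_cell: "\<sigma> \<in> cells (sd N) n \<Longrightarrow> simp_op m n f \<Longrightarrow> restrict (\<sigma> \<circ> f) {0..m} \<in> cells (sd N) m"
  unfolding sd_NK by (rule NK_cells_sact) auto

lemma sd_image_cell:
  assumes t: "\<tau> \<in> cells (sd m) l" and f: "simp_op m n f"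
  shows "restrict ((`) f \<circ> \<tau>) {0..l} \<in> cells (sd n) l"
proof -
  have A: "\<forall>i j. i \<le> j \<longrightarrow> j \<le> l \<longrightarrow> \<tau> i \<subseteq> \<tau> j" and B: "\<forall>i\<in>{0..l}. \<tau> i \<noteq> {} \<and> \<tau> i \<subseteq> {0..m}"
    using t unfolding sd_cells by auto
  have fm: "\<forall>i\<in>{0..m}. f i \<le> n" using f by (simp add: simp_op_def)
  have C: "\<forall>i\<in>{0..l}. f ` \<tau> i \<noteq> {} \<and> f ` \<tau> i \<subseteq> {0..n}"
  proof
    fix i assume "i \<in> {0..l}"
    then have "\<tau> i \<noteq> {}" "\<tau> i \<subseteq> {0..m}" using B by auto
    then show "f ` \<tau> i \<noteq> {} \<and> f ` \<tau> i \<subseteq> {0..n}" using fm by fastforce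
  qed
  show ?thesis unfolding sd_cells
  proof (intro conjI)
    show "\<forall>i j. i \<le> j \<longrightarrow> j \<le> l \<longrightarrow> restrict ((`) f \<circ> \<tau>) {0..l} i \<subseteq> restrict ((`) f \<circ> \<tau>) {0..l} j"
      using A by (simp add: image_mono)
  qed (use C in auto)
qed

lemma Ex_sact_cell:
  assumes F: "F \<in> cells (Ex C) n" and f: "simp_op m n f"
  shows "sact (Ex C) m n f F \<in> cells (Ex C) m"
proof -
  have sm: "smap (sd n) C F" using F by (simp add: Ex_cells)
  have fS: "f ` S \<subseteq> {0..n}" if "S \<subseteq> {0..m}" for S
    using f that unfolding simp_op_def by fastforce
  have "smap (sd m) C (\<lambda>k \<sigma>. F k (restrict ((`) f \<circ> \<sigma>) {0..k}))"
    unfolding sd_NK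
  proof (rule smap_pb)
    show "smap (NK (\<subseteq>) (Pow {S. S \<noteq> {} \<and> S \<subseteq> {0..n}})) C F" using sm by (simp add: sd_NK)
    show "\<forall>Y\<in>Pow {S. S \<noteq> {} \<and> S \<subseteq> {0..m}}. (`) f ` Y \<in> Pow {S. S \<noteq> {} \<and> S \<subseteq> {0..n}}"
      using fS by auto
    show "\<forall>Y\<in>Pow {S. S \<noteq> {} \<and> S \<subseteq> {0..m}}. \<forall>a\<in>Y. \<forall>b\<in>Y. a \<subseteq> b \<longrightarrow> f ` a \<subseteq> f ` b"
      by auto
  qed
  then have "smap (sd m) C (sact (Ex C) m n f F)"
    unfolding Ex_sact
    by (rule smap_cong) (auto intro: sd_sact_cell)
  then show ?thesis unfolding Ex_cells Ex_sact by auto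
qed

lemma is_sset_Ex: "is_sset (Ex C)"
  unfolding is_sset_def
proof (intro conjI allI impI)
  fix m n f x assume "simp_op m n f" "x \<in> cells (Ex C) n"
  then show "sact (Ex C) m n f x \<in> cells (Ex C) m" by (rule Ex_sact_cell[rotated])
next
  fix m n f g x assume f: "simp_op m n f" and fg: "\<forall>i\<in>{0..m}. f i = g i" and x: "x \<in> cells (Ex C) n"
  have fgeq: "restrict ((`) f \<circ> \<sigma>) {0..k} = restrict ((`) g \<circ> \<sigma>) {0..k}" if "\<sigma> \<in> cells (sd m) k" for \<sigma> k
  proof -
    have "\<forall>i\<in>{0..k}. \<sigma> i \<subseteq> {0..m}" using that by (simp add: sd_cells)
    then have "\<forall>i\<in>{0..k}. f ` \<sigma> i = g ` \<sigma> i" using fg by (meson image_cong subsetD)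
    then show ?thesis by (auto simp: fun_eq_iff restrict_def)
  qed
  show "sact (Ex C) m n f x = sact (Ex C) m n g x" unfolding Ex_sact
    by (rule ext)+ (simp add: fgeq)
next
  fix n x assume x: "x \<in> cells (Ex C) n"
  have "x k (restrict ((`) (\<lambda>i. i) \<circ> \<sigma>) {0..k}) = x k \<sigma>" if "\<sigma> \<in> cells (sd n) k" for k \<sigma>
  proof -
    have "restrict ((`) (\<lambda>i. i) \<circ> \<sigma>) {0..k} = \<sigma>" using that unfolding sd_cells
      by (auto simp: fun_eq_iff restrict_def extensional_def)
    then show ?thesis by simp
  qed
  then show "sact (Ex C) n n (\<lambda>i. i) x = x" using x unfolding Ex_sact Ex_cells
    by (auto simp: fun_eq_iff)
next
  fix k m n g f x assume g: "simp_op k m g" and f: "simp_op m n f" and x: "x \<in> cells (Ex C) n"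
  show "sact (Ex C) k m g (sact (Ex C) m n f x) = sact (Ex C) k n (f \<circ> g) x"
  proof (rule ext, rule ext)
    fix l \<sigma>
    show "sact (Ex C) k m g (sact (Ex C) m n f x) l \<sigma> = sact (Ex C) k n (f \<circ> g) x l \<sigma>"
    proof (cases "\<sigma> \<in> cells (sd k) l")
      case True
      have c: "restrict ((`) g \<circ> \<sigma>) {0..l} \<in> cells (sd m) l" by (rule sd_image_cell[OF True g])
      have "restrict ((`) f \<circ> restrict ((`) g \<circ> \<sigma>) {0..l}) {0..l} = restrict ((`) (f \<circ> g) \<circ> \<sigma>) {0..l}"
        by (auto simp: fun_eq_iff restrict_def image_comp)
      then show ?thesis using True c unfolding Ex_sact by simp
    next
      case False
      then show ?thesis unfolding Ex_sact by simp
    qed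
  qed
qed


definition down :: "'p set set \<Rightarrow> bool" where
  "down K \<longleftrightarrow> (\<forall>Y\<in>K. \<forall>Z\<subseteq>Y. Z \<in> K)"

lemma img_sact_sub: "simp_op m n f \<Longrightarrow> restrict (\<sigma> \<circ> f) {0..m} ` {0..m} \<subseteq> \<sigma> ` {0..n}"
  by (auto simp: simp_op_def)

lemma NK_cell_sact: "\<sigma> \<in> cells (NK le K) n \<Longrightarrow> simp_op m n f \<Longrightarrow> down K \<Longrightarrow> restrict (\<sigma> \<circ> f) {0..m} \<in> cells (NK le K) m"
  by (rule NK_cells_sact) (auto simp: down_def)

lemma NK_cell_mono: "\<sigma> \<in> cells (NK le K) n \<Longrightarrow> \<sigma> ` {0..n} \<in> K' \<Longrightarrow> \<sigma> \<in> cells (NK le K') n"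
  unfolding NK_cells by auto

lemma smap_glue:
  assumes G1: "smap (NK le K1) C G1" and G2: "smap (NK le K2) C G2"
    and d1: "down K1" and d2: "down K2"
    and agree: "\<forall>m \<sigma>. \<sigma> \<in> cells (NK le (K1 \<inter> K2)) m \<longrightarrow> G1 m \<sigma> = G2 m \<sigma>"
  shows "smap (NK le (K1 \<union> K2)) C (\<lambda>m \<sigma>. if \<sigma> ` {0..m} \<in> K1 then G1 m \<sigma> else G2 m \<sigma>)"
  unfolding smap_NK
proof (intro conjI allI impI)
  fix m \<sigma> assume s: "\<sigma> \<in> cells (NK le (K1 \<union> K2)) m"
  show "(if \<sigma> ` {0..m} \<in> K1 then G1 m \<sigma> else G2 m \<sigma>) \<in> cells C m"
  proof (cases "\<sigma> ` {0..m} \<in> K1")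
    case True
    then show ?thesis using G1 NK_cell_mono[OF s True] unfolding smap_NK by auto
  next
    case False
    then have "\<sigma> ` {0..m} \<in> K2" using s unfolding NK_cells by auto
    then show ?thesis using False G2 NK_cell_mono[OF s] unfolding smap_NK by auto
  qed
next
  fix m n f \<sigma> assume f: "simp_op m n f" and s: "\<sigma> \<in> cells (NK le (K1 \<union> K2)) n"
  define \<tau> where "\<tau> = restrict (\<sigma> \<circ> f) {0..m}"
  have sub: "\<tau> ` {0..m} \<subseteq> \<sigma> ` {0..n}" unfolding \<tau>_def by (rule img_sact_sub[OF f])
  show "(if \<tau> ` {0..m} \<in> K1 then G1 m \<tau> else G2 m \<tau>) =
        sact C m n f (if \<sigma> ` {0..n} \<in> K1 then G1 n \<sigma> else G2 n \<sigma>)"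
  proof (cases "\<sigma> ` {0..n} \<in> K1")
    case True
    have s1: "\<sigma> \<in> cells (NK le K1) n" by (rule NK_cell_mono[OF s True])
    have "\<tau> ` {0..m} \<in> K1" using True sub d1 unfolding down_def by blast
    then show ?thesis using True G1 s1 f unfolding smap_NK \<tau>_def by auto
  next
    case False
    then have K2: "\<sigma> ` {0..n} \<in> K2" using s unfolding NK_cells by auto
    have s2: "\<sigma> \<in> cells (NK le K2) n" by (rule NK_cell_mono[OF s K2])
    have t2: "\<tau> ` {0..m} \<in> K2" using K2 sub d2 unfolding down_def by blast
    have nat2: "G2 m \<tau> = sact C m n f (G2 n \<sigma>)" using G2 s2 f unfolding smap_NK \<tau>_def by auto
    show ?thesis
    proof (cases "\<tau> ` {0..m} \<in> K1")
      case True
      have tc: "\<tau> \<in> cells (NK le K2) m" unfolding \<tau>_def by (rule NK_cell_sact[OF s2 f d2])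
      have "\<tau> \<in> cells (NK le (K1 \<inter> K2)) m" using tc True t2 unfolding NK_cells by auto
      then have "G1 m \<tau> = G2 m \<tau>" using agree by auto
      then show ?thesis using True False nat2 by simp
    next
      case F2: False
      then show ?thesis using False nat2 by simp
    qed
  qed
qed

definition chain :: "'b set set \<Rightarrow> bool" where
  "chain Y \<longleftrightarrow> (\<forall>A\<in>Y. \<forall>B\<in>Y. A \<subseteq> B \<or> B \<subseteq> A)"

lemma chain_Union_in: "finite Y \<Longrightarrow> Y \<noteq> {} \<Longrightarrow> chain Y \<Longrightarrow> \<Union>Y \<in> Y"
proof (induction Y rule: finite_ne_induct)
  case (singleton x) then show ?case by simp
next
  case (insert x F)
  then have ch: "chain F" unfolding chain_def by auto
  then have U: "\<Union>F \<in> F" using insert by auto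
  then have "x \<subseteq> \<Union>F \<or> \<Union>F \<subseteq> x" using insert.prems unfolding chain_def by auto
  then show ?case using U by (metis Sup_insert Un_absorb1 Un_absorb2 insertCI)
qed

lemma chain_enum:
  "finite Y \<Longrightarrow> chain Y \<Longrightarrow> \<exists>e. e ` {..<card Y} = Y \<and> (\<forall>i j. i < j \<longrightarrow> j < card Y \<longrightarrow> e i \<subset> e j)"
proof (induction "card Y" arbitrary: Y)
  case 0
  then show ?case by auto
next
  case (Suc n)
  then have ne: "Y \<noteq> {}" by auto
  define M where "M = \<Union>Y"
  have M: "M \<in> Y" using chain_Union_in[OF Suc.prems(1) ne Suc.prems(2)] M_def by simp
  define Y' where "Y' = Y - {M}"
  have c': "card Y' = n" using Suc.hyps(2) M Suc.prems unfolding Y'_def by simp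
  have ch': "chain Y'" using Suc.prems(2) unfolding chain_def Y'_def by auto
  obtain e where e: "e ` {..<n} = Y'" "\<forall>i j. i < j \<longrightarrow> j < n \<longrightarrow> e i \<subset> e j"
    using Suc.hyps(1)[of Y'] c' ch' Suc.prems(1) unfolding Y'_def by auto
  define e' where "e' = e(n := M)"
  have "e' ` {..<Suc n} = Y"
  proof -
    have "{..<Suc n} = insert n {..<n}" by auto
    then have "e' ` {..<Suc n} = insert M (e ` {..<n})" unfolding e'_def by auto
    then show ?thesis using e(1) M unfolding Y'_def by auto
  qed
  moreover have "\<forall>i j. i < j \<longrightarrow> j < Suc n \<longrightarrow> e' i \<subset> e' j"
  proof (intro allI impI)
    fix i j assume ij: "i < j" "j < Suc n"
    show "e' i \<subset> e' j"
    proof (cases "j = n")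
      case True
      have "e i \<in> Y'" using e(1) ij True by auto
      then have "e i \<subseteq> M" "e i \<noteq> M" unfolding Y'_def M_def by auto
      then show ?thesis using True ij unfolding e'_def by auto
    next
      case False
      then show ?thesis using ij e(2) unfolding e'_def by auto
    qed
  qed
  ultimately show ?case using Suc.hyps(2) by metis
qed


lemma ext_inner:
  fixes G :: "nat \<Rightarrow> (nat \<Rightarrow> 'b set) \<Rightarrow> 'a"
  assumes qc: "\<forall>n k. 0 < k \<longrightarrow> k < n \<longrightarrow> extends_along (horn n k) (\<Delta> n) C"
    and Kd: "down K"
    and G: "smap (NK (\<subseteq>) K) C G"
    and fin: "finite Y" and ch: "chain Y"
    and x: "x \<in> Y" and a: "a \<in> Y" "a \<subset> x" and b: "b \<in> Y" "x \<subset> b"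
    and notin: "Y - {x} \<notin> K"
    and faces: "\<forall>Z. Z \<subset> Y \<longrightarrow> Z \<noteq> Y - {x} \<longrightarrow> Z \<in> K"
  shows "\<exists>G'. smap (NK (\<subseteq>) (K \<union> {Y - {x}, Y})) C G' \<and>
              (\<forall>m \<sigma>. \<sigma> \<in> cells (NK (\<subseteq>) K) m \<longrightarrow> G' m \<sigma> = G m \<sigma>)"
proof -
  obtain e where e1: "e ` {..<card Y} = Y" and e2: "\<forall>i j. i < j \<longrightarrow> j < card Y \<longrightarrow> e i \<subset> e j"
    using chain_enum[OF fin ch] by blast
  define N where "N = card Y - 1"
  have cY: "card Y = Suc N"
  proof -
    have "card Y \<noteq> 0" using fin x by auto
    then show ?thesis unfolding N_def by simp
  qed
  have lt: "{..<card Y} = {0..N}" using cY by auto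
  have erange: "e i \<in> Y" if "i \<le> N" for i using e1 that lt by auto
  have esurj: "\<exists>i\<le>N. e i = S" if SY: "S \<in> Y" for S
  proof -
    have "S \<in> e ` {0..N}" using e1 lt SY by simp
    then show ?thesis by auto
  qed
  have estrict: "e i \<subset> e j" if "i < j" "j \<le> N" for i j using e2 that cY by auto
  have einj: "i = j" if ij: "i \<le> N" "j \<le> N" "e i = e j" for i j
  proof (rule ccontr)
    assume "i \<noteq> j"
    then consider "i < j" | "j < i" by linarith
    then show False
    proof cases
      case 1 then have "e i \<subset> e j" using estrict ij by blast
      then show False using ij by simp
    next
      case 2 then have "e j \<subset> e i" using estrict ij by blast
      then show False using ij by simp
    qed
  qed
  have emono: "e i \<subseteq> e j" if "i \<le> j" "j \<le> N" for i j
    using estrict[of i j] that by (cases "i = j") auto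
  define inv where "inv S = (THE i. i \<le> N \<and> e i = S)" for S
  have inv_e: "inv S \<le> N \<and> e (inv S) = S" if SY: "S \<in> Y" for S
  proof -
    obtain i where i: "i \<le> N" "e i = S" using esurj[OF SY] by blast
    have "inv S = i" unfolding inv_def
      by (rule the_equality) (use i einj in auto)
    then show ?thesis using i by simp
  qed
  have inv_e2: "inv (e i) = i" if iN: "i \<le> N" for i
    unfolding inv_def by (rule the_equality) (use iN einj in auto)
  have inv_mono: "inv S \<le> inv T" if "S \<in> Y" "T \<in> Y" "S \<subseteq> T" for S T
  proof (rule ccontr)
    assume "\<not> inv S \<le> inv T"
    then have lt2: "inv T < inv S" by simp
    have SN: "inv S \<le> N" "e (inv S) = S" using inv_e[OF that(1)] by auto
    have TN: "e (inv T) = T" using inv_e[OF that(2)] by auto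
    have "e (inv T) \<subset> e (inv S)" by (rule estrict[OF lt2 SN(1)])
    then show False using SN TN that(3) by simp
  qed
  define q where "q = inv x"
  have qN: "q \<le> N" and eq: "e q = x" using inv_e[OF x] q_def by auto
  have q0: "0 < q"
  proof -
    have "inv a \<le> q" using inv_mono[OF a(1) x] a q_def by auto
    moreover have "inv a \<noteq> q" using inv_e[OF a(1)] eq a by auto
    ultimately show ?thesis by simp
  qed
  have qN2: "q < N"
  proof -
    have "q \<le> inv b" using inv_mono[OF x b(1)] b q_def by auto
    moreover have "inv b \<noteq> q" using inv_e[OF b(1)] eq b by auto
    moreover have "inv b \<le> N" using inv_e[OF b(1)] by simp
    ultimately show ?thesis by simp
  qed
  define KH where "KH = {Z. Z \<subseteq> {0..N} \<and> insert q Z \<noteq> {0..N}}"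
  have hornN: "horn N q = NK (\<le>) KH" unfolding KH_def by (rule horn_NK)
  have big: "Y - {x} \<subseteq> e ` Z \<Longrightarrow> Z \<subseteq> {0..N} \<Longrightarrow> insert q Z = {0..N}" for Z
  proof -
    assume sub: "Y - {x} \<subseteq> e ` Z" and Z: "Z \<subseteq> {0..N}"
    have H: "i \<in> insert q Z" if "i \<le> N" for i
    proof (cases "i = q")
      case False
      then have "e i \<noteq> x" using einj[OF that qN] eq by auto
      then have "e i \<in> e ` Z" using sub erange[OF that] by auto
      then obtain z where "z \<in> Z" "e z = e i" by auto
      then have "z = i" using einj[of z i] Z that by auto
      then show ?thesis using \<open>z \<in> Z\<close> by simp
    qed simp
    show "insert q Z = {0..N}"
    proof (rule subset_antisym)
      show "insert q Z \<subseteq> {0..N}" using Z qN by auto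
      show "{0..N} \<subseteq> insert q Z"
      proof
        fix i assume "i \<in> {0..N}"
        then show "i \<in> insert q Z" using H by simp
      qed
    qed
  qed
  have hmap: "smap (NK (\<le>) KH) C (\<lambda>m \<tau>. G m (restrict (e \<circ> \<tau>) {0..m}))"
  proof (rule smap_pb[OF G])
    show "\<forall>Z\<in>KH. e ` Z \<in> K"
    proof
      fix Z assume "Z \<in> KH"
      then have Z: "Z \<subseteq> {0..N}" "insert q Z \<noteq> {0..N}" unfolding KH_def by auto
      have sub: "e ` Z \<subseteq> Y" using Z erange by auto
      have "\<not> Y - {x} \<subseteq> e ` Z" using big Z by blast
      then show "e ` Z \<in> K" using faces sub by blast
    qed
    show "\<forall>Z\<in>KH. \<forall>i\<in>Z. \<forall>j\<in>Z. i \<le> j \<longrightarrow> e i \<subseteq> e j"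
    proof (intro ballI impI)
      fix Z i j assume "Z \<in> KH" "i \<in> Z" "j \<in> Z" "i \<le> j"
      then have "j \<le> N" unfolding KH_def by auto
      then show "e i \<subseteq> e j" using emono \<open>i \<le> j\<close> by blast
    qed
  qed
  have ext: "extends_along (horn N q) (\<Delta> N) C" using qc q0 qN2 by simp
  have hm: "smap (horn N q) C (\<lambda>m \<tau>. G m (restrict (e \<circ> \<tau>) {0..m}))" using hmap hornN by simp
  obtain X where X: "smap (\<Delta> N) C X"
    and Xh: "\<forall>m \<tau>. \<tau> \<in> cells (horn N q) m \<longrightarrow> X m \<tau> = G m (restrict (e \<circ> \<tau>) {0..m})"
    using ext[unfolded extends_along_def, rule_format, OF hm] by blast
  have XN: "smap (NK (\<le>) (Pow {0..N})) C X" using X by (simp add: Delta_NK)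
  define K' where "K' = K \<union> {Y - {x}, Y}"
  have YK: "Y \<notin> K" using notin Kd unfolding down_def by blast
  have dK': "down K'" unfolding down_def
  proof (intro ballI allI impI)
    fix W Z assume W: "W \<in> K'" and Z: "Z \<subseteq> W"
    show "Z \<in> K'"
    proof (cases "W \<in> K")
      case True then show ?thesis using Kd Z unfolding down_def K'_def by blast
    next
      case False
      then have WY: "W \<subseteq> Y" using W unfolding K'_def by auto
      show ?thesis
      proof (cases "Z = Y \<or> Z = Y - {x}")
        case True then show ?thesis unfolding K'_def by auto
      next
        case False
        then have "Z \<subset> Y" using Z WY by auto
        then show ?thesis using faces False unfolding K'_def by auto
      qed
    qed
  qed
  define G' where "G' m \<sigma> = (if \<sigma> ` {0..m} \<in> K then G m \<sigma> else X m (restrict (inv \<circ> \<sigma>) {0..m}))" for m \<sigma>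
  have imgY: "\<sigma> ` {0..n} \<subseteq> Y" if "\<sigma> \<in> cells (NK (\<subseteq>) K') n" "\<sigma> ` {0..n} \<notin> K" for \<sigma> n
    using that unfolding NK_cells K'_def by auto
  have inv_cell: "restrict (inv \<circ> \<sigma>) {0..n} \<in> cells (NK (\<le>) (Pow {0..N})) n"
    if "\<sigma> \<in> cells (NK (\<subseteq>) K') n" "\<sigma> ` {0..n} \<subseteq> Y" for \<sigma> n
  proof -
    have mono: "\<forall>i j. i \<le> j \<longrightarrow> j \<le> n \<longrightarrow> \<sigma> i \<subseteq> \<sigma> j" using that(1) unfolding NK_cells by auto
    have inY: "\<sigma> i \<in> Y" if "i \<le> n" for i using \<open>\<sigma> ` {0..n} \<subseteq> Y\<close> that by auto
    show ?thesis unfolding NK_cells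
    proof (intro conjI)
      show "\<forall>i j. i \<le> j \<longrightarrow> j \<le> n \<longrightarrow> restrict (inv \<circ> \<sigma>) {0..n} i \<le> restrict (inv \<circ> \<sigma>) {0..n} j"
        using mono inY inv_mono by auto
      show "restrict (inv \<circ> \<sigma>) {0..n} ` {0..n} \<in> Pow {0..N}" using inY inv_e by auto
    qed auto
  qed
  have "smap (NK (\<subseteq>) K') C G'"
    unfolding smap_NK
  proof (intro conjI allI impI)
    fix m \<sigma> assume s: "\<sigma> \<in> cells (NK (\<subseteq>) K') m"
    show "G' m \<sigma> \<in> cells C m"
    proof (cases "\<sigma> ` {0..m} \<in> K")
      case True
      then show ?thesis using G NK_cell_mono[OF s True] unfolding smap_NK G'_def by auto
    next
      case False
      then show ?thesis using XN inv_cell[OF s imgY[OF s False]] unfolding smap_NK G'_def by auto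
    qed
  next
    fix m n f \<sigma> assume f: "simp_op m n f" and s: "\<sigma> \<in> cells (NK (\<subseteq>) K') n"
    define \<tau> where "\<tau> = restrict (\<sigma> \<circ> f) {0..m}"
    have sub: "\<tau> ` {0..m} \<subseteq> \<sigma> ` {0..n}" unfolding \<tau>_def by (rule img_sact_sub[OF f])
    have fr: "\<forall>i\<in>{0..m}. f i \<le> n" using f by (simp add: simp_op_def)
    have resteq: "restrict (inv \<circ> \<tau>) {0..m} = restrict (restrict (inv \<circ> \<sigma>) {0..n} \<circ> f) {0..m}"
      unfolding \<tau>_def using fr by (auto simp: fun_eq_iff)
    show "G' m \<tau> = sact C m n f (G' n \<sigma>)"
    proof (cases "\<sigma> ` {0..n} \<in> K")
      case True
      have s1: "\<sigma> \<in> cells (NK (\<subseteq>) K) n" by (rule NK_cell_mono[OF s True])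
      have "\<tau> ` {0..m} \<in> K" using True sub Kd unfolding down_def by blast
      then show ?thesis using True G s1 f unfolding smap_NK \<tau>_def G'_def by auto
    next
      case False
      have sY: "\<sigma> ` {0..n} \<subseteq> Y" by (rule imgY[OF s False])
      have ic: "restrict (inv \<circ> \<sigma>) {0..n} \<in> cells (NK (\<le>) (Pow {0..N})) n" by (rule inv_cell[OF s sY])
      have natX: "X m (restrict (inv \<circ> \<tau>) {0..m}) = sact C m n f (X n (restrict (inv \<circ> \<sigma>) {0..n}))"
        unfolding resteq using XN ic f unfolding smap_NK by blast
      show ?thesis
      proof (cases "\<tau> ` {0..m} \<in> K")
        case False2: False
        then show ?thesis using False natX unfolding G'_def by simp
      next
        case True
        have tY: "\<tau> ` {0..m} \<subseteq> Y" using sub sY by auto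
        have tK': "\<tau> \<in> cells (NK (\<subseteq>) K') m" unfolding \<tau>_def
          by (rule NK_cell_sact[OF s f dK'])
        have tmono: "\<forall>i j. i \<le> j \<longrightarrow> j \<le> m \<longrightarrow> \<tau> i \<subseteq> \<tau> j" using tK' unfolding NK_cells by auto
        have tinY: "\<tau> i \<in> Y" if "i \<le> m" for i using tY that by auto
        have hc: "restrict (inv \<circ> \<tau>) {0..m} \<in> cells (horn N q) m"
          unfolding hornN NK_cells
        proof (intro conjI)
          show "\<forall>i j. i \<le> j \<longrightarrow> j \<le> m \<longrightarrow> restrict (inv \<circ> \<tau>) {0..m} i \<le> restrict (inv \<circ> \<tau>) {0..m} j"
            using tmono tinY inv_mono by auto
          have rng: "restrict (inv \<circ> \<tau>) {0..m} ` {0..m} = inv ` (\<tau> ` {0..m})" by auto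
          have "insert q (inv ` (\<tau> ` {0..m})) \<noteq> {0..N}"
          proof
            assume full: "insert q (inv ` (\<tau> ` {0..m})) = {0..N}"
            have "Y - {x} \<subseteq> \<tau> ` {0..m}"
            proof
              fix S assume S: "S \<in> Y - {x}"
              have "inv S \<le> N" "e (inv S) = S" using inv_e S by auto
              moreover have "inv S \<noteq> q" using S \<open>e (inv S) = S\<close> eq by auto
              ultimately have "inv S \<in> inv ` (\<tau> ` {0..m})" using full by auto
              then obtain T where T: "T \<in> \<tau> ` {0..m}" "inv T = inv S" by (metis imageE)
              then have "T \<in> Y" using tY by auto
              then have "T = S" using T inv_e[of T] inv_e[of S] S by auto
              then show "S \<in> \<tau> ` {0..m}" using T by simp
            qed
            then have "\<tau> ` {0..m} = Y - {x} \<or> \<tau> ` {0..m} = Y" using tY by blast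
            then show False using True notin YK by auto
          qed
          then show "restrict (inv \<circ> \<tau>) {0..m} ` {0..m} \<in> KH"
            unfolding KH_def rng using tinY inv_e by auto
        qed auto
        have "restrict (e \<circ> restrict (inv \<circ> \<tau>) {0..m}) {0..m} = \<tau>"
          using tinY inv_e unfolding \<tau>_def by (auto simp: fun_eq_iff)
        then have "X m (restrict (inv \<circ> \<tau>) {0..m}) = G m \<tau>" using Xh hc by metis
        then show ?thesis using True False natX unfolding G'_def by simp
      qed
    qed
  qed
  moreover have "\<forall>m \<sigma>. \<sigma> \<in> cells (NK (\<subseteq>) K) m \<longrightarrow> G' m \<sigma> = G m \<sigma>"
    unfolding G'_def NK_cells by auto
  ultimately show ?thesis unfolding K'_def by blast
qed


definition Qs :: "nat \<Rightarrow> nat \<Rightarrow> nat set set" where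
  "Qs n k = {S. S \<noteq> {} \<and> S \<subseteq> {0..n} \<and> \<not> ({0..n} - {k}) \<subseteq> S}"
definition Ls :: "nat \<Rightarrow> nat \<Rightarrow> nat set set" where
  "Ls n k = {A. A \<subseteq> {0..n} \<and> k \<in> A}"
definition mixed :: "nat \<Rightarrow> nat \<Rightarrow> nat set set \<Rightarrow> bool" where
  "mixed n k Y \<longleftrightarrow> finite Y \<and> chain Y \<and> Y \<subseteq> insert {0..n} (Qs n k) \<and> {0..n} \<in> Y \<and> (\<exists>S\<in>Y. k \<notin> S)"
definition Mx :: "nat \<Rightarrow> nat set set \<Rightarrow> nat set" where
  "Mx k Y = \<Union>{S\<in>Y. k \<notin> S}"
definition bs :: "nat \<Rightarrow> nat set set \<Rightarrow> nat set set" where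
  "bs k Y = Y - {insert k (Mx k Y)}"
definition typeI :: "nat \<Rightarrow> nat \<Rightarrow> nat set set \<Rightarrow> bool" where
  "typeI n k Y \<longleftrightarrow> mixed n k Y \<and> insert k (Mx k Y) \<notin> Y"
definition rk :: "nat \<Rightarrow> nat set set \<Rightarrow> nat" where
  "rk k Y = card Y * card Y + card {S\<in>Y. k \<notin> S}"

context
  fixes n k :: nat
  assumes kn: "k \<le> n"
begin

lemma top_notin_Qs: "{0..n} \<notin> Qs n k"
  unfolding Qs_def by auto

lemma Mx_props:
  assumes "mixed n k Y"
  shows "Mx k Y \<in> Y" "k \<notin> Mx k Y" "\<And>S. S \<in> Y \<Longrightarrow> k \<notin> S \<Longrightarrow> S \<subseteq> Mx k Y"
    "\<And>S. S \<in> Y \<Longrightarrow> k \<in> S \<Longrightarrow> insert k (Mx k Y) \<subseteq> S"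
proof -
  let ?L = "{S\<in>Y. k \<notin> S}"
  have fin: "finite ?L" and ne: "?L \<noteq> {}" and ch: "chain ?L"
    using assms unfolding mixed_def chain_def by auto
  have U: "\<Union>?L \<in> ?L" by (rule chain_Union_in[OF fin ne ch])
  then show M1: "Mx k Y \<in> Y" and M2: "k \<notin> Mx k Y" unfolding Mx_def by auto
  show "\<And>S. S \<in> Y \<Longrightarrow> k \<notin> S \<Longrightarrow> S \<subseteq> Mx k Y" unfolding Mx_def by auto
  fix S assume S: "S \<in> Y" "k \<in> S"
  have "S \<subseteq> Mx k Y \<or> Mx k Y \<subseteq> S" using assms M1 S unfolding mixed_def chain_def by auto
  then have "Mx k Y \<subseteq> S" using S M2 by auto
  then show "insert k (Mx k Y) \<subseteq> S" using S by auto
qed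

lemma Mx_Qs:
  assumes "mixed n k Y"
  shows "Mx k Y \<in> Qs n k" "insert k (Mx k Y) \<in> Qs n k" "insert k (Mx k Y) \<noteq> {0..n}"
proof -
  have M: "Mx k Y \<in> Y" "k \<notin> Mx k Y" using Mx_props[OF assms] by auto
  have "Mx k Y \<noteq> {0..n}" using M kn by auto
  then show MQ: "Mx k Y \<in> Qs n k" using M assms unfolding mixed_def by auto
  then have nsub: "\<not> ({0..n} - {k}) \<subseteq> insert k (Mx k Y)" unfolding Qs_def by auto
  show "insert k (Mx k Y) \<in> Qs n k" using MQ nsub kn unfolding Qs_def by auto
  show "insert k (Mx k Y) \<noteq> {0..n}" using nsub by auto
qed

lemma Mx_insert: "Mx k (insert (insert k M) Y) = Mx k Y"
  unfolding Mx_def by auto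

lemma Mx_bs: "Mx k (bs k Y) = Mx k Y"
  unfolding Mx_def bs_def by auto

lemma mixed_sub:
  assumes "mixed n k X" "W \<subseteq> X" "{0..n} \<in> W" "\<exists>S\<in>W. k \<notin> S"
  shows "mixed n k W"
  using assms unfolding mixed_def chain_def by (auto intro: finite_subset)

lemma bs_mixed:
  assumes "mixed n k Y"
  shows "mixed n k (bs k Y)" "typeI n k (bs k Y)" "Mx k (bs k Y) = Mx k Y"
    "Y \<subseteq> insert (insert k (Mx k Y)) (bs k Y)" "bs k Y \<subseteq> Y"
proof -
  have ne: "insert k (Mx k Y) \<noteq> {0..n}" using Mx_Qs[OF assms] by auto
  have M: "Mx k Y \<in> Y" "k \<notin> Mx k Y" using Mx_props[OF assms] by auto
  show m: "mixed n k (bs k Y)"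
    by (rule mixed_sub[OF assms]) (use ne M assms in \<open>auto simp: bs_def mixed_def\<close>)
  show "Mx k (bs k Y) = Mx k Y" by (rule Mx_bs)
  then show "typeI n k (bs k Y)" using m unfolding typeI_def bs_def by auto
  show "Y \<subseteq> insert (insert k (Mx k Y)) (bs k Y)" "bs k Y \<subseteq> Y" unfolding bs_def by auto
qed

lemma typeI_bs: "typeI n k Y \<Longrightarrow> bs k Y = Y"
  unfolding typeI_def bs_def by auto

lemma typeI_ext:
  assumes "typeI n k Y"
  defines "Y' \<equiv> insert (insert k (Mx k Y)) Y"
  shows "mixed n k Y'" "bs k Y' = Y" "Mx k Y' = Mx k Y"
proof -
  have mY: "mixed n k Y" using assms unfolding typeI_def by auto
  note P = Mx_props[OF mY]
  note QQ = Mx_Qs[OF mY]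
  have ch: "chain Y'"
    unfolding chain_def Y'_def
  proof (intro ballI)
    fix A B assume A: "A \<in> insert (insert k (Mx k Y)) Y" and B: "B \<in> insert (insert k (Mx k Y)) Y"
    have c: "S \<subseteq> insert k (Mx k Y) \<or> insert k (Mx k Y) \<subseteq> S" if "S \<in> Y" for S
      using P(3)[OF that] P(4)[OF that] by (cases "k \<in> S") auto
    have chY: "chain Y" using mY unfolding mixed_def by auto
    show "A \<subseteq> B \<or> B \<subseteq> A"
    proof (cases "A \<in> Y \<and> B \<in> Y")
      case True then show ?thesis using chY unfolding chain_def by blast
    next
      case False
      then show ?thesis using A B c by auto
    qed
  qed
  show "mixed n k Y'" using mY ch QQ unfolding mixed_def Y'_def by auto
  show MY: "Mx k Y' = Mx k Y" unfolding Y'_def by (rule Mx_insert)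
  have "bs k Y' = Y' - {insert k (Mx k Y)}" unfolding bs_def MY by simp
  then show "bs k Y' = Y" unfolding Y'_def using assms(1) unfolding typeI_def by auto
qed

lemma rk_le:
  assumes "a1 \<le> a2" "b1 \<le> (b2::nat)"
  shows "a1 * a1 + b1 \<le> a2 * a2 + b2"
  using assms by (simp add: add_mono mult_mono)

lemma rk_eq:
  assumes "a1 \<le> a2" "b1 \<le> (b2::nat)" "a1 * a1 + b1 = a2 * a2 + b2"
  shows "a1 = a2"
proof (rule ccontr)
  assume "a1 \<noteq> a2"
  then have "a1 < a2" using assms by simp
  then have "a1 * a1 < a2 * a2" by (simp add: mult_strict_mono)
  then show False using assms by simp
qed

lemma rk_mono:
  assumes m1: "mixed n k X1" and m2: "mixed n k X2" and sub: "X1 \<subseteq> X2"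
  shows "rk k (bs k X1) \<le> rk k (bs k X2) \<and> (rk k (bs k X1) = rk k (bs k X2) \<longrightarrow> bs k X1 = bs k X2)"
proof -
  have f1: "finite X1" and f2: "finite X2" using m1 m2 unfolding mixed_def by auto
  let ?L1 = "{S\<in>bs k X1. k \<notin> S}" and ?L2 = "{S\<in>bs k X2. k \<notin> S}"
  have L1: "?L1 = {S\<in>X1. k \<notin> S}" and L2: "?L2 = {S\<in>X2. k \<notin> S}" unfolding bs_def by auto
  have fL2: "finite ?L2" using f2 unfolding L2 by auto
  have Lsub: "?L1 \<subseteq> ?L2" using sub unfolding L1 L2 by auto
  have Msub: "Mx k X1 \<subseteq> Mx k X2" using sub unfolding Mx_def by auto
  have fb2: "finite (bs k X2)" using f2 unfolding bs_def by auto
  show ?thesis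
  proof (cases "Mx k X1 = Mx k X2")
    case True
    have bsub: "bs k X1 \<subseteq> bs k X2" using sub True unfolding bs_def by auto
    have c1: "card (bs k X1) \<le> card (bs k X2)" by (rule card_mono[OF fb2 bsub])
    have c2: "card ?L1 \<le> card ?L2" by (rule card_mono[OF fL2 Lsub])
    have le: "rk k (bs k X1) \<le> rk k (bs k X2)" unfolding rk_def by (rule rk_le[OF c1 c2])
    have "bs k X1 = bs k X2" if "rk k (bs k X1) = rk k (bs k X2)"
    proof -
      have "card (bs k X1) = card (bs k X2)" using rk_eq[OF c1 c2] that unfolding rk_def by simp
      then show ?thesis using card_subset_eq[OF fb2 bsub] by simp
    qed
    then show ?thesis using le by simp
  next
    case False
    have M2: "Mx k X2 \<in> X2" "k \<notin> Mx k X2" using Mx_props[OF m2] by auto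
    have M2n: "Mx k X2 \<notin> X1"
    proof
      assume "Mx k X2 \<in> X1"
      then have "Mx k X2 \<subseteq> Mx k X1" using Mx_props(3)[OF m1] M2 by auto
      then show False using Msub False by auto
    qed
    have Lpsub: "?L1 \<subset> ?L2" using Lsub M2 M2n unfolding L1 L2 by auto
    have c2: "card ?L1 < card ?L2" by (rule psubset_card_mono[OF fL2 Lpsub])
    have X1sub: "X1 \<subseteq> X2 - {Mx k X2}" using sub M2n by auto
    have "card (bs k X1) \<le> card X1" using f1 unfolding bs_def by (auto intro: card_mono)
    also have "\<dots> \<le> card (X2 - {Mx k X2})" using X1sub f2 by (auto intro: card_mono)
    also have "\<dots> = card X2 - 1" using M2 f2 by simp
    also have "\<dots> \<le> card (bs k X2)" unfolding bs_def using f2 by (simp add: card_Diff_singleton_if)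
    finally have c1: "card (bs k X1) \<le> card (bs k X2)" .
    have "rk k (bs k X1) < rk k (bs k X2)" unfolding rk_def
      using rk_le[OF c1 order_refl, of "card ?L1"] c2 by linarith
    then show ?thesis by simp
  qed
qed

definition Kz :: "nat set set set \<Rightarrow> nat set set set" where
  "Kz Z = Pow (Qs n k) \<union> Pow (Ls n k) \<union> {X. mixed n k X \<and> bs k X \<in> Z}"

definition rclosed :: "nat set set set \<Rightarrow> bool" where
  "rclosed Z \<longleftrightarrow> (\<forall>Y\<in>Z. typeI n k Y) \<and> (\<forall>Y\<in>Z. \<forall>Y0. typeI n k Y0 \<longrightarrow> rk k Y0 < rk k Y \<longrightarrow> Y0 \<in> Z)"

lemma notmixed_base:
  assumes "W \<subseteq> insert {0..n} (Qs n k)" "\<not> ({0..n} \<in> W \<and> (\<exists>S\<in>W. k \<notin> S))"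
  shows "W \<in> Pow (Qs n k) \<union> Pow (Ls n k)"
proof (cases "{0..n} \<in> W")
  case True
  then have "\<forall>S\<in>W. k \<in> S" using assms by auto
  then have "W \<subseteq> Ls n k" using assms(1) unfolding Ls_def Qs_def by auto
  then show ?thesis by auto
next
  case False
  then show ?thesis using assms(1) by auto
qed

lemma Kz_down:
  assumes "rclosed Z"
  shows "down (Kz Z)"
  unfolding down_def
proof (intro ballI allI impI)
  fix X W assume X: "X \<in> Kz Z" and W: "W \<subseteq> X"
  show "W \<in> Kz Z"
  proof (cases "X \<in> Pow (Qs n k) \<union> Pow (Ls n k)")
    case True
    then show ?thesis using W unfolding Kz_def by auto
  next
    case False
    then have mX: "mixed n k X" and bX: "bs k X \<in> Z" using X unfolding Kz_def by auto
    have Wsub: "W \<subseteq> insert {0..n} (Qs n k)" using mX W unfolding mixed_def by auto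
    show ?thesis
    proof (cases "{0..n} \<in> W \<and> (\<exists>S\<in>W. k \<notin> S)")
      case False
      then show ?thesis using notmixed_base[OF Wsub] unfolding Kz_def by auto
    next
      case True
      then have mW: "mixed n k W" using mixed_sub[OF mX W] by auto
      have r: "rk k (bs k W) \<le> rk k (bs k X)" and r2: "rk k (bs k W) = rk k (bs k X) \<longrightarrow> bs k W = bs k X"
        using rk_mono[OF mW mX W] by auto
      have "bs k W \<in> Z"
      proof (cases "rk k (bs k W) = rk k (bs k X)")
        case True then show ?thesis using r2 bX by simp
      next
        case False
        then have "rk k (bs k W) < rk k (bs k X)" using r by simp
        then show ?thesis using assms bX bs_mixed(2)[OF mW] unfolding rclosed_def by blast
      qed
      then show ?thesis using mW unfolding Kz_def by auto
    qed
  qed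
qed

end


lemma smap_sub':
  assumes "smap (NK le K) C G" "\<forall>m \<sigma>. \<sigma> \<in> cells (NK le K') m \<longrightarrow> \<sigma> ` {0..m} \<in> K"
  shows "smap (NK le K') C G"
  using assms NK_cell_mono unfolding smap_NK by metis

lemma NK_chain: "\<sigma> \<in> cells (NK (\<subseteq>) K) m \<Longrightarrow> chain (\<sigma> ` {0..m})"
  unfolding NK_cells chain_def
proof (intro ballI)
  fix A B assume H: "\<sigma> \<in> extensional {0..m} \<and> (\<forall>i j. i \<le> j \<longrightarrow> j \<le> m \<longrightarrow> \<sigma> i \<subseteq> \<sigma> j) \<and> \<sigma> ` {0..m} \<in> K"
    and A: "A \<in> \<sigma> ` {0..m}" and B: "B \<in> \<sigma> ` {0..m}"
  obtain i j where "i \<le> m" "j \<le> m" "A = \<sigma> i" "B = \<sigma> j" using A B by auto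
  then show "A \<subseteq> B \<or> B \<subseteq> A" using H by (cases "i \<le> j") auto
qed

context
  fixes n k :: nat
  assumes kn: "k \<le> n"
begin

lemma stage_ind:
  assumes qc: "\<forall>n k. 0 < k \<longrightarrow> k < n \<longrightarrow> extends_along (horn n k) (\<Delta> n) C"
    and G: "smap (NK (\<subseteq>) (Kz n k {})) C G"
  shows "finite Z \<Longrightarrow> rclosed n k Z \<Longrightarrow> \<exists>G'. smap (NK (\<subseteq>) (Kz n k Z)) C G' \<and>
            (\<forall>m \<sigma>. \<sigma> \<in> cells (NK (\<subseteq>) (Kz n k {})) m \<longrightarrow> G' m \<sigma> = G m \<sigma>)"
proof (induction "card Z" arbitrary: Z rule: less_induct)
  case less
  show ?case
  proof (cases "Z = {}")
    case True
    then show ?thesis using G by auto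
  next
    case False
    define r where "r = Max (rk k ` Z)"
    have "r \<in> rk k ` Z" unfolding r_def using False less.prems by auto
    then obtain Y where YZ: "Y \<in> Z" and rY: "rk k Y = r" by auto
    have maxY: "rk k Y1 \<le> rk k Y" if "Y1 \<in> Z" for Y1
      unfolding rY r_def using that less.prems by auto
    define Z0 where "Z0 = Z - {Y}"
    have tY: "typeI n k Y" using less.prems YZ unfolding rclosed_def[OF kn] by auto
    have rc0: "rclosed n k Z0"
      unfolding rclosed_def[OF kn]
    proof (intro conjI ballI allI impI)
      fix Y1 assume "Y1 \<in> Z0" then show "typeI n k Y1" using less.prems unfolding Z0_def rclosed_def[OF kn] by auto
    next
      fix Y1 Y0 assume Y1: "Y1 \<in> Z0" and t0: "typeI n k Y0" and r0: "rk k Y0 < rk k Y1"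
      have Y1Z: "Y1 \<in> Z" using Y1 unfolding Z0_def by auto
      have "Y0 \<in> Z" using less.prems(2) Y1Z t0 r0 unfolding rclosed_def[OF kn] by blast
      moreover have "Y0 \<noteq> Y" using maxY[OF Y1Z] r0 by auto
      ultimately show "Y0 \<in> Z0" unfolding Z0_def by auto
    qed
    have cZ0: "card Z0 < card Z" unfolding Z0_def by (rule card_Diff1_less[OF less.prems(1) YZ])
    obtain G0 where G0: "smap (NK (\<subseteq>) (Kz n k Z0)) C G0"
      and G0a: "\<forall>m \<sigma>. \<sigma> \<in> cells (NK (\<subseteq>) (Kz n k {})) m \<longrightarrow> G0 m \<sigma> = G m \<sigma>"
      using less.hyps[OF cZ0] rc0 less.prems(1) unfolding Z0_def by auto
    define x where "x = insert k (Mx k Y)"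
    define Y' where "Y' = insert x Y"
    have mY: "mixed n k Y" using tY unfolding typeI_def by auto
    have xY: "x \<notin> Y" using tY unfolding typeI_def x_def by auto
    have mY': "mixed n k Y'" and bY': "bs k Y' = Y" and MY': "Mx k Y' = Mx k Y"
      using typeI_ext[OF kn tY] unfolding Y'_def x_def by auto
    have bY: "bs k Y = Y" by (rule typeI_bs[OF kn tY])
    have MP: "Mx k Y \<in> Y" "k \<notin> Mx k Y" using Mx_props[OF kn mY] by auto
    have xQ: "x \<in> Qs n k" "x \<noteq> {0..n}" using Mx_Qs[OF kn mY] unfolding x_def by auto
    have YY': "Y' - {x} = Y" using xY unfolding Y'_def by auto
    have topY: "{0..n} \<in> Y" using mY unfolding mixed_def by auto
    have YnotK: "Y \<notin> Kz n k Z0"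
    proof
      assume A: "Y \<in> Kz n k Z0"
      have "Y \<notin> Pow (Qs n k)" using topY top_notin_Qs[OF kn] by auto
      moreover have "Y \<notin> Pow (Ls n k)" using mY unfolding mixed_def Ls_def by auto
      moreover have "bs k Y \<notin> Z0" using bY unfolding Z0_def by auto
      ultimately show False using A unfolding Kz_def[OF kn] by auto
    qed
    have dK0: "down (Kz n k Z0)" by (rule Kz_down[OF kn rc0])
    have faces: "\<forall>W. W \<subset> Y' \<longrightarrow> W \<noteq> Y' - {x} \<longrightarrow> W \<in> Kz n k Z0"
    proof (intro allI impI)
      fix W assume W: "W \<subset> Y'" "W \<noteq> Y' - {x}"
      have Wsub: "W \<subseteq> insert {0..n} (Qs n k)" using W mY' unfolding mixed_def by auto
      show "W \<in> Kz n k Z0"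
      proof (cases "{0..n} \<in> W \<and> (\<exists>S\<in>W. k \<notin> S)")
        case False
        then show ?thesis using notmixed_base[OF kn Wsub] unfolding Kz_def[OF kn] by auto
      next
        case True
        then have mW: "mixed n k W" using mixed_sub[OF kn mY'] W by auto
        have r1: "rk k (bs k W) \<le> rk k Y" and r2: "rk k (bs k W) = rk k Y \<longrightarrow> bs k W = Y"
          using rk_mono[OF kn mW mY'] W bY' by auto
        have "rk k (bs k W) \<noteq> rk k Y"
        proof
          assume "rk k (bs k W) = rk k Y"
          then have bW: "bs k W = Y" using r2 by simp
          have MW: "Mx k W = Mx k Y" using bs_mixed(3)[OF kn mW] bW by simp
          have W1: "W \<subseteq> insert x Y" using bs_mixed(4)[OF kn mW] unfolding bW MW x_def .
          have W2: "Y \<subseteq> W" using bs_mixed(5)[OF kn mW] unfolding bW .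
          have "W = Y \<or> W = Y'" using W1 W2 unfolding Y'_def by blast
          then show False using W YY' by blast
        qed
        then have lt: "rk k (bs k W) < rk k Y" using r1 by simp
        have tW: "typeI n k (bs k W)" by (rule bs_mixed(2)[OF kn mW])
        have "bs k W \<in> Z" using less.prems(2) YZ tW lt unfolding rclosed_def[OF kn] by blast
        moreover have "bs k W \<noteq> Y" using lt by auto
        ultimately have "bs k W \<in> Z0" unfolding Z0_def by blast
        then show ?thesis using mW unfolding Kz_def[OF kn] by auto
      qed
    qed
    have finY': "finite Y'" and chY': "chain Y'" using mY' unfolding mixed_def by auto
    obtain G1 where G1: "smap (NK (\<subseteq>) (Kz n k Z0 \<union> {Y' - {x}, Y'})) C G1"
      and G1a: "\<forall>m \<sigma>. \<sigma> \<in> cells (NK (\<subseteq>) (Kz n k Z0)) m \<longrightarrow> G1 m \<sigma> = G0 m \<sigma>"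
    proof -
      have "\<exists>G'. smap (NK (\<subseteq>) (Kz n k Z0 \<union> {Y' - {x}, Y'})) C G' \<and>
              (\<forall>m \<sigma>. \<sigma> \<in> cells (NK (\<subseteq>) (Kz n k Z0)) m \<longrightarrow> G' m \<sigma> = G0 m \<sigma>)"
      proof (rule ext_inner[OF qc dK0 G0 finY' chY'])
        show "x \<in> Y'" unfolding Y'_def by simp
        show "Mx k Y \<in> Y'" "Mx k Y \<subset> x" using MP unfolding Y'_def x_def by auto
        show "{0..n} \<in> Y'" using topY unfolding Y'_def by simp
        show "x \<subset> {0..n}" using xQ unfolding Qs_def by auto
        show "Y' - {x} \<notin> Kz n k Z0" using YY' YnotK by simp
      qed (rule faces)
      then show ?thesis using that by blast
    qed
    have KZ: "Kz n k Z = Kz n k Z0 \<union> {Y' - {x}, Y'}"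
    proof
      show "Kz n k Z \<subseteq> Kz n k Z0 \<union> {Y' - {x}, Y'}"
      proof
        fix X assume X: "X \<in> Kz n k Z"
        show "X \<in> Kz n k Z0 \<union> {Y' - {x}, Y'}"
        proof (cases "X \<in> Kz n k Z0")
          case False
          then have mX: "mixed n k X" and bX0: "bs k X \<in> Z" and bX1: "bs k X \<notin> Z0"
            using X unfolding Kz_def[OF kn] by auto
          have bX: "bs k X = Y" using bX0 bX1 unfolding Z0_def by blast
          have MX: "Mx k X = Mx k Y" using bs_mixed(3)[OF kn mX] bX by simp
          have X1: "X \<subseteq> insert x Y" using bs_mixed(4)[OF kn mX] unfolding bX MX x_def .
          have X2: "Y \<subseteq> X" using bs_mixed(5)[OF kn mX] unfolding bX .
          have "X = Y \<or> X = Y'" using X1 X2 unfolding Y'_def by blast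
          then show ?thesis using YY' by blast
        qed simp
      qed
      have s1: "Kz n k Z0 \<subseteq> Kz n k Z" unfolding Kz_def[OF kn] Z0_def by blast
      have s2: "Y \<in> Kz n k Z" using YZ mY bY unfolding Kz_def[OF kn] by simp
      have s3: "Y' \<in> Kz n k Z" using YZ mY' bY' unfolding Kz_def[OF kn] by simp
      show "Kz n k Z0 \<union> {Y' - {x}, Y'} \<subseteq> Kz n k Z" using s1 s2 s3 YY' by simp
    qed
    have agree: "\<forall>m \<sigma>. \<sigma> \<in> cells (NK (\<subseteq>) (Kz n k {})) m \<longrightarrow> G1 m \<sigma> = G m \<sigma>"
    proof (intro allI impI)
      fix m \<sigma> assume s: "\<sigma> \<in> cells (NK (\<subseteq>) (Kz n k {})) m"
      have "Kz n k {} \<subseteq> Kz n k Z0" unfolding Kz_def[OF kn] by auto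
      then have "\<sigma> \<in> cells (NK (\<subseteq>) (Kz n k Z0)) m" using s unfolding NK_cells by auto
      then show "G1 m \<sigma> = G m \<sigma>" using G1a G0a s by auto
    qed
    show ?thesis using G1 agree unfolding KZ by blast
  qed
qed

lemma stage1c:
  assumes qc: "\<forall>n k. 0 < k \<longrightarrow> k < n \<longrightarrow> extends_along (horn n k) (\<Delta> n) C"
    and G: "smap (NK (\<subseteq>) (Pow (Qs n k) \<union> Pow (Ls n k))) C G"
  shows "\<exists>G'. smap (NK (\<subseteq>) (Pow (insert {0..n} (Qs n k)))) C G' \<and>
            (\<forall>m \<sigma>. \<sigma> \<in> cells (NK (\<subseteq>) (Pow (Qs n k) \<union> Pow (Ls n k))) m \<longrightarrow> G' m \<sigma> = G m \<sigma>)"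
proof -
  have K0: "Kz n k {} = Pow (Qs n k) \<union> Pow (Ls n k)" unfolding Kz_def[OF kn] by auto
  define Za where "Za = {Y. typeI n k Y}"
  have "Za \<subseteq> Pow (insert {0..n} (Qs n k))" unfolding Za_def typeI_def mixed_def by auto
  moreover have "finite (Pow (insert {0..n} (Qs n k)))"
  proof -
    have "insert {0..n} (Qs n k) \<subseteq> Pow {0..n}" unfolding Qs_def by auto
    then have "finite (insert {0..n} (Qs n k))" by (rule finite_subset) simp
    then show ?thesis by simp
  qed
  ultimately have fZ: "finite Za" by (rule finite_subset)
  have rc: "rclosed n k Za" unfolding rclosed_def[OF kn] Za_def by auto
  obtain G' where G': "smap (NK (\<subseteq>) (Kz n k Za)) C G'"
    and ag: "\<forall>m \<sigma>. \<sigma> \<in> cells (NK (\<subseteq>) (Kz n k {})) m \<longrightarrow> G' m \<sigma> = G m \<sigma>"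
  proof -
    have Gk: "smap (NK (\<subseteq>) (Kz n k {})) C G" using G K0 by simp
    show ?thesis using stage_ind[OF qc Gk fZ rc] that by blast
  qed
  have "smap (NK (\<subseteq>) (Pow (insert {0..n} (Qs n k)))) C G'"
  proof (rule smap_sub'[OF G'], intro allI impI)
    fix m \<sigma> assume s: "\<sigma> \<in> cells (NK (\<subseteq>) (Pow (insert {0..n} (Qs n k)))) m"
    let ?W = "\<sigma> ` {0..m}"
    have Wsub: "?W \<subseteq> insert {0..n} (Qs n k)" using s unfolding NK_cells by auto
    have ch: "chain ?W" by (rule NK_chain[OF s])
    show "?W \<in> Kz n k Za"
    proof (cases "{0..n} \<in> ?W \<and> (\<exists>S\<in>?W. k \<notin> S)")
      case False
      then show ?thesis using notmixed_base[OF kn Wsub] unfolding Kz_def[OF kn] by auto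
    next
      case True
      then have mW: "mixed n k ?W" using Wsub ch unfolding mixed_def by auto
      then show ?thesis using bs_mixed(2)[OF kn mW] unfolding Kz_def[OF kn] Za_def by auto
    qed
  qed
  then show ?thesis using ag K0 by auto
qed

end


lemma Lmk_NK: "fst (Lmk n k) = NK (\<subseteq>) (Pow (Ls n k))"
  by (simp add: Lmk_def Let_def nerve_NK Ls_def)

lemma LJmk_NK: "fst (LJmk n k) = NK (\<subseteq>) (Pow (Ls n k - {{0..n}}))"
  unfolding LJmk_def Let_def Lmk_NK
  by (auto simp: NK_def ssub_def nerve_def fun_eq_iff)

lemma cube_CLF:
  assumes clf: "CLF (sharp C)" and n2: "2 \<le> n"
    and g: "smap (NK (\<subseteq>) (Pow (Ls n n - {{0..n}}))) C g"
  shows "\<exists>G. smap (NK (\<subseteq>) (Pow (Ls n n))) C G \<and>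
            (\<forall>m \<sigma>. \<sigma> \<in> cells (NK (\<subseteq>) (Pow (Ls n n - {{0..n}}))) m \<longrightarrow> G m \<sigma> = g m \<sigma>)"
proof -
  have r: "mrlp (LJmk n n) (Lmk n n) (sharp C)" using clf n2 unfolding CLF_def by auto
  have mm: "mmap (LJmk n n) (sharp C) g"
    unfolding mmap_def
  proof
    show sm: "smap (fst (LJmk n n)) (fst (sharp C)) g" using g by (simp add: LJmk_NK sharp_def)
    show "\<forall>e\<in>snd (LJmk n n). g 1 e \<in> snd (sharp C)"
    proof
      fix e assume "e \<in> snd (LJmk n n)"
      then have "e \<in> cells (fst (LJmk n n)) 1" unfolding LJmk_def Let_def by (auto simp: ssub_def)
      then show "g 1 e \<in> snd (sharp C)" using sm unfolding smap_def sharp_def by auto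
    qed
  qed
  obtain G where G: "mmap (Lmk n n) (sharp C) G" and Ga: "\<forall>m x. x \<in> cells (fst (LJmk n n)) m \<longrightarrow> G m x = g m x"
    using r mm unfolding mrlp_def by blast
  have "smap (NK (\<subseteq>) (Pow (Ls n n))) C G" using G unfolding mmap_def by (simp add: Lmk_NK sharp_def)
  then show ?thesis using Ga by (auto simp: LJmk_NK)
qed

definition swp :: "nat \<Rightarrow> nat \<Rightarrow> nat \<Rightarrow> nat" where
  "swp n k i = (if i = k then n else if i = n then k else i)"

lemma swp_swp[simp]: "swp n k (swp n k i) = i"
  unfolding swp_def by auto

lemma swp_img_img[simp]: "swp n k ` (swp n k ` A) = A"
  by (simp add: image_comp comp_def)

lemma swp_range: "k \<le> n \<Longrightarrow> i \<le> n \<Longrightarrow> swp n k i \<le> n"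
  unfolding swp_def by auto

lemma swp_top: "k \<le> n \<Longrightarrow> swp n k ` {0..n} = {0..n}"
proof -
  assume kn: "k \<le> n"
  have "swp n k ` {0..n} \<subseteq> {0..n}" using swp_range[OF kn] by auto
  moreover have "{0..n} \<subseteq> swp n k ` {0..n}"
  proof
    fix i assume "i \<in> {0..n}"
    then have "swp n k i \<in> {0..n}" "swp n k (swp n k i) = i" using swp_range[OF kn] by auto
    then show "i \<in> swp n k ` {0..n}" by (metis imageI)
  qed
  ultimately show ?thesis by blast
qed

lemma swp_L:
  assumes kn: "k \<le> n" and A: "A \<in> Ls n k"
  shows "swp n k ` A \<in> Ls n n" "A \<noteq> {0..n} \<Longrightarrow> swp n k ` A \<noteq> {0..n}"
proof -
  have "n \<in> swp n k ` A" using A unfolding Ls_def swp_def by (auto intro: image_eqI[where x=k])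
  then show "swp n k ` A \<in> Ls n n" using A swp_range[OF kn] unfolding Ls_def by auto
  show "A \<noteq> {0..n} \<Longrightarrow> swp n k ` A \<noteq> {0..n}"
    using swp_top[OF kn] swp_img_img by metis
qed

lemma swp_L':
  assumes kn: "k \<le> n" and A: "A \<in> Ls n n"
  shows "swp n k ` A \<in> Ls n k" "A \<noteq> {0..n} \<Longrightarrow> swp n k ` A \<noteq> {0..n}"
proof -
  have "k \<in> swp n k ` A" using A unfolding Ls_def swp_def by (auto intro: image_eqI[where x=n])
  then show "swp n k ` A \<in> Ls n k" using A swp_range[OF kn] unfolding Ls_def by auto
  show "A \<noteq> {0..n} \<Longrightarrow> swp n k ` A \<noteq> {0..n}"
    using swp_top[OF kn] swp_img_img by metis
qed

lemma cube:
  assumes clf: "CLF (sharp C)" and n2: "2 \<le> n" and kn: "k \<le> n"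
    and g: "smap (NK (\<subseteq>) (Pow (Ls n k - {{0..n}}))) C g"
  shows "\<exists>G. smap (NK (\<subseteq>) (Pow (Ls n k))) C G \<and>
            (\<forall>m \<sigma>. \<sigma> \<in> cells (NK (\<subseteq>) (Pow (Ls n k - {{0..n}}))) m \<longrightarrow> G m \<sigma> = g m \<sigma>)"
proof -
  let ?p = "\<lambda>A. swp n k ` A"
  have g': "smap (NK (\<subseteq>) (Pow (Ls n n - {{0..n}}))) C (\<lambda>m \<sigma>. g m (restrict (?p \<circ> \<sigma>) {0..m}))"
  proof (rule smap_pb[OF g])
    show "\<forall>Y\<in>Pow (Ls n n - {{0..n}}). ?p ` Y \<in> Pow (Ls n k - {{0..n}})"
    proof (intro ballI)
      fix Y assume Y: "Y \<in> Pow (Ls n n - {{0..n}})"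
      have "?p A \<in> Ls n k - {{0..n}}" if "A \<in> Y" for A
        using Y that swp_L'[OF kn, of A] by blast
      then show "?p ` Y \<in> Pow (Ls n k - {{0..n}})" by blast
    qed
  qed (auto simp: image_mono)
  obtain G' where G': "smap (NK (\<subseteq>) (Pow (Ls n n))) C G'"
    and G'a: "\<forall>m \<sigma>. \<sigma> \<in> cells (NK (\<subseteq>) (Pow (Ls n n - {{0..n}}))) m \<longrightarrow> G' m \<sigma> = g m (restrict (?p \<circ> \<sigma>) {0..m})"
    using cube_CLF[OF clf n2 g'] by blast
  have G: "smap (NK (\<subseteq>) (Pow (Ls n k))) C (\<lambda>m \<sigma>. G' m (restrict (?p \<circ> \<sigma>) {0..m}))"
  proof (rule smap_pb[OF G'])
    show "\<forall>Y\<in>Pow (Ls n k). ?p ` Y \<in> Pow (Ls n n)"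
    proof (intro ballI)
      fix Y assume Y: "Y \<in> Pow (Ls n k)"
      have "?p A \<in> Ls n n" if "A \<in> Y" for A
        using Y that swp_L[OF kn, of A] by blast
      then show "?p ` Y \<in> Pow (Ls n n)" by blast
    qed
  qed (auto simp: image_mono)
  have "G' m (restrict (?p \<circ> \<sigma>) {0..m}) = g m \<sigma>"
    if s: "\<sigma> \<in> cells (NK (\<subseteq>) (Pow (Ls n k - {{0..n}}))) m" for m \<sigma>
  proof -
    have vals: "?p (\<sigma> i) \<in> Ls n n - {{0..n}}" if "i \<le> m" for i
    proof -
      have "\<sigma> ` {0..m} \<subseteq> Ls n k - {{0..n}}" using s unfolding NK_cells by auto
      then have "\<sigma> i \<in> Ls n k - {{0..n}}" using that by (meson atLeastAtMost_iff image_subset_iff zero_le)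
      then show ?thesis using swp_L[OF kn, of "\<sigma> i"] by blast
    qed
    have c: "restrict (?p \<circ> \<sigma>) {0..m} \<in> cells (NK (\<subseteq>) (Pow (Ls n n - {{0..n}}))) m"
      using s vals unfolding NK_cells by (auto simp: image_mono)
    have "restrict (?p \<circ> restrict (?p \<circ> \<sigma>) {0..m}) {0..m} = \<sigma>"
      using s unfolding NK_cells by (auto simp: fun_eq_iff extensional_def)
    then show ?thesis using G'a c by simp
  qed
  then show ?thesis using G by blast
qed


lemma restrict_id_on:
  assumes "\<sigma> \<in> cells (NK le (Pow A)) m" "\<forall>S\<in>A. p S = S"
  shows "restrict (p \<circ> \<sigma>) {0..m} = \<sigma>"
proof -
  have "\<sigma> ` {0..m} \<subseteq> A" "\<sigma> \<in> extensional {0..m}" using assms(1) unfolding NK_cells by auto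
  then show ?thesis using assms(2) by (auto simp: fun_eq_iff extensional_def image_subset_iff)
qed

lemma Ls_Qs: "k \<le> n \<Longrightarrow> Ls n k - {{0..n}} \<subseteq> Qs n k"
  unfolding Ls_def Qs_def by auto

lemma Qs_Ls: "Qs n k \<inter> Ls n k \<subseteq> Ls n k - {{0..n}}"
  unfolding Ls_def Qs_def by auto

lemma extend_sd:
  assumes clf: "CLF (sharp C)"
    and qc: "\<forall>n k. 0 < k \<longrightarrow> k < n \<longrightarrow> extends_along (horn n k) (\<Delta> n) C"
    and kn: "k \<le> n" and n1: "1 \<le> n"
    and phi: "smap (NK (\<subseteq>) (Pow (Qs n k))) C \<phi>"
  shows "\<exists>\<Psi>. smap (sd n) C \<Psi> \<and> (\<forall>m \<sigma>. \<sigma> \<in> cells (NK (\<subseteq>) (Pow (Qs n k))) m \<longrightarrow> \<Psi> m \<sigma> = \<phi> m \<sigma>)"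
proof (cases "n = 1")
  case True
  have Q1: "Qs n k = {{k}}"
  proof
    show "Qs n k \<subseteq> {{k}}"
    proof
      fix S assume S: "S \<in> Qs n k"
      then have S1: "S \<noteq> {}" "S \<subseteq> {0..1}" "\<not> ({0..1} - {k}) \<subseteq> S" using True unfolding Qs_def by auto
      have k1: "k \<le> 1" using kn True by simp
      have F: "{0..1::nat} - {k} = {1 - k}" using k1 by (cases k) auto
      have nin: "1 - k \<notin> S" using S1(3) unfolding F by simp
      have sub: "S \<subseteq> {k}"
      proof
        fix x assume x: "x \<in> S"
        then have "x \<le> 1" using S1(2) by auto
        then have "x = k \<or> x = 1 - k" using k1 by auto
        then show "x \<in> {k}" using x nin by auto
      qed
      have "S = {k}" using sub S1(1) by blast
      then show "S \<in> {{k}}" by simp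
    qed
    have k1: "k \<le> 1" using kn True by simp
    have F: "{0..1::nat} - {k} = {1 - k}" using k1 by (cases k) auto
    have "1 - k \<noteq> k" using k1 by arith
    then have "\<not> ({0..n} - {k}) \<subseteq> {k}" using F True by auto
    then show "{{k}} \<subseteq> Qs n k" using True kn unfolding Qs_def by auto
  qed
  let ?p = "\<lambda>S::nat set. {k}"
  have "smap (NK (\<subseteq>) (Pow {S. S \<noteq> {} \<and> S \<subseteq> {0..n}})) C (\<lambda>m \<sigma>. \<phi> m (restrict (?p \<circ> \<sigma>) {0..m}))"
  proof (rule smap_pb[OF phi])
    show "\<forall>Y\<in>Pow {S. S \<noteq> {} \<and> S \<subseteq> {0..n}}. ?p ` Y \<in> Pow (Qs n k)"
      unfolding Q1 by blast
  qed simp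
  moreover have "\<forall>m \<sigma>. \<sigma> \<in> cells (NK (\<subseteq>) (Pow (Qs n k))) m \<longrightarrow> \<phi> m (restrict (?p \<circ> \<sigma>) {0..m}) = \<phi> m \<sigma>"
  proof (intro allI impI)
    fix m \<sigma> assume s: "\<sigma> \<in> cells (NK (\<subseteq>) (Pow (Qs n k))) m"
    have "\<forall>S\<in>Qs n k. ?p S = S" unfolding Q1 by simp
    then have "restrict (?p \<circ> \<sigma>) {0..m} = \<sigma>" by (rule restrict_id_on[OF s])
    then show "\<phi> m (restrict (?p \<circ> \<sigma>) {0..m}) = \<phi> m \<sigma>" by simp
  qed
  ultimately show ?thesis unfolding sd_NK by blast
next
  case False
  then have n2: "2 \<le> n" using n1 by simp
  have g: "smap (NK (\<subseteq>) (Pow (Ls n k - {{0..n}}))) C \<phi>"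
    by (rule smap_sub[OF phi]) (use Ls_Qs[OF kn] in auto)
  obtain GL where GL: "smap (NK (\<subseteq>) (Pow (Ls n k))) C GL"
    and GLa: "\<forall>m \<sigma>. \<sigma> \<in> cells (NK (\<subseteq>) (Pow (Ls n k - {{0..n}}))) m \<longrightarrow> GL m \<sigma> = \<phi> m \<sigma>"
    using cube[OF clf n2 kn g] by blast
  have agree: "\<forall>m \<sigma>. \<sigma> \<in> cells (NK (\<subseteq>) (Pow (Qs n k) \<inter> Pow (Ls n k))) m \<longrightarrow> \<phi> m \<sigma> = GL m \<sigma>"
  proof (intro allI impI)
    fix m \<sigma> assume s: "\<sigma> \<in> cells (NK (\<subseteq>) (Pow (Qs n k) \<inter> Pow (Ls n k))) m"
    then have "\<sigma> ` {0..m} \<subseteq> Qs n k \<inter> Ls n k" unfolding NK_cells by (simp add: Int_greatest)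
    then have "\<sigma> ` {0..m} \<subseteq> Ls n k - {{0..n}}" using Qs_Ls[of n k] by (rule subset_trans)
    then have "\<sigma> ` {0..m} \<in> Pow (Ls n k - {{0..n}})" by (rule PowI)
    then have "\<sigma> \<in> cells (NK (\<subseteq>) (Pow (Ls n k - {{0..n}}))) m"
      by (rule NK_cell_mono[OF s])
    then show "\<phi> m \<sigma> = GL m \<sigma>" using GLa by simp
  qed
  define G1 where "G1 = (\<lambda>m \<sigma>. if \<sigma> ` {0..m} \<in> Pow (Qs n k) then \<phi> m \<sigma> else GL m \<sigma>)"
  have G1: "smap (NK (\<subseteq>) (Pow (Qs n k) \<union> Pow (Ls n k))) C G1"
  proof -
    have d1: "down (Pow (Qs n k))" unfolding down_def by blast
    have d2: "down (Pow (Ls n k))" unfolding down_def by blast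
    show ?thesis unfolding G1_def by (rule smap_glue[OF phi GL d1 d2 agree])
  qed
  obtain G2 where G2: "smap (NK (\<subseteq>) (Pow (insert {0..n} (Qs n k)))) C G2"
    and G2a: "\<forall>m \<sigma>. \<sigma> \<in> cells (NK (\<subseteq>) (Pow (Qs n k) \<union> Pow (Ls n k))) m \<longrightarrow> G2 m \<sigma> = G1 m \<sigma>"
    using stage1c[OF kn qc G1] by blast
  define \<rho> where "\<rho> S = (if ({0..n} - {k}) \<subseteq> S then {0..n} else S)" for S :: "nat set"
  have rhoQ: "\<forall>S\<in>Qs n k. \<rho> S = S" unfolding \<rho>_def Qs_def by auto
  have "smap (NK (\<subseteq>) (Pow {S. S \<noteq> {} \<and> S \<subseteq> {0..n}})) C (\<lambda>m \<sigma>. G2 m (restrict (\<rho> \<circ> \<sigma>) {0..m}))"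
  proof (rule smap_pb[OF G2])
    have one: "\<rho> S \<in> insert {0..n} (Qs n k)" if "S \<noteq> {}" "S \<subseteq> {0..n}" for S
    proof (cases "({0..n} - {k}) \<subseteq> S")
      case True then show ?thesis unfolding \<rho>_def by simp
    next
      case False then show ?thesis using that unfolding \<rho>_def Qs_def by simp
    qed
    show "\<forall>Y\<in>Pow {S. S \<noteq> {} \<and> S \<subseteq> {0..n}}. \<rho> ` Y \<in> Pow (insert {0..n} (Qs n k))"
      using one by blast
    have two: "\<rho> a \<subseteq> \<rho> b" if "a \<subseteq> b" "b \<subseteq> {0..n}" for a b
    proof (cases "({0..n} - {k}) \<subseteq> a")
      case True
      then have "({0..n} - {k}) \<subseteq> b" using that by blast
      then show ?thesis using True unfolding \<rho>_def by simp
    next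
      case False
      then have "\<rho> a = a" unfolding \<rho>_def by simp
      moreover have "b \<subseteq> \<rho> b" using that unfolding \<rho>_def by simp
      ultimately show ?thesis using that by blast
    qed
    show "\<forall>Y\<in>Pow {S. S \<noteq> {} \<and> S \<subseteq> {0..n}}. \<forall>a\<in>Y. \<forall>b\<in>Y. a \<subseteq> b \<longrightarrow> \<rho> a \<subseteq> \<rho> b"
      using two by blast
  qed
  moreover have "\<forall>m \<sigma>. \<sigma> \<in> cells (NK (\<subseteq>) (Pow (Qs n k))) m \<longrightarrow> G2 m (restrict (\<rho> \<circ> \<sigma>) {0..m}) = \<phi> m \<sigma>"
  proof (intro allI impI)
    fix m \<sigma> assume s: "\<sigma> \<in> cells (NK (\<subseteq>) (Pow (Qs n k))) m"
    have e: "restrict (\<rho> \<circ> \<sigma>) {0..m} = \<sigma>" by (rule restrict_id_on[OF s rhoQ])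
    have s2: "\<sigma> \<in> cells (NK (\<subseteq>) (Pow (Qs n k) \<union> Pow (Ls n k))) m" using s unfolding NK_cells by auto
    have "\<sigma> ` {0..m} \<in> Pow (Qs n k)" using s unfolding NK_cells by auto
    then show "G2 m (restrict (\<rho> \<circ> \<sigma>) {0..m}) = \<phi> m \<sigma>" using e G2a s2 unfolding G1_def by simp
  qed
  ultimately show ?thesis unfolding sd_NK by blast
qed


definition rT :: "nat set \<Rightarrow> nat \<Rightarrow> nat" where
  "rT T i = (if \<exists>t\<in>T. i \<le> t then (LEAST t. t \<in> T \<and> i \<le> t) else Max T)"

lemma rT_in: "finite T \<Longrightarrow> T \<noteq> {} \<Longrightarrow> rT T i \<in> T"
  unfolding rT_def by (auto intro: LeastI2_ex)

lemma rT_fix: "i \<in> T \<Longrightarrow> rT T i = i"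
  unfolding rT_def by (auto intro!: Least_equality)

lemma rT_ge: "\<exists>t\<in>T. i \<le> t \<Longrightarrow> i \<le> rT T i"
  unfolding rT_def by (auto intro: LeastI2_ex)

lemma rT_mono:
  assumes "finite T" "T \<noteq> {}" "i \<le> j"
  shows "rT T i \<le> rT T j"
proof (cases "\<exists>t\<in>T. j \<le> t")
  case True
  then have ex: "\<exists>t\<in>T. i \<le> t" using assms(3) by (meson le_trans)
  have "rT T j \<in> T" "j \<le> rT T j" using rT_in[OF assms(1,2)] rT_ge[OF True] by auto
  then have "i \<le> rT T j" using assms(3) by simp
  then have "(LEAST t. t \<in> T \<and> i \<le> t) \<le> rT T j" using \<open>rT T j \<in> T\<close> by (auto intro: Least_le)
  then show ?thesis using ex unfolding rT_def[of T i] by simp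
next
  case False
  then have "rT T j = Max T" unfolding rT_def by simp
  moreover have "rT T i \<le> Max T" using rT_in[OF assms(1,2)] assms(1) by simp
  ultimately show ?thesis by simp
qed

definition rs :: "nat \<Rightarrow> nat set \<Rightarrow> nat \<Rightarrow> nat" where
  "rs n T = restrict (rT T) {0..n}"

lemma Qs_fin: "T \<in> Qs n k \<Longrightarrow> finite T \<and> T \<noteq> {} \<and> T \<subseteq> {0..n}"
proof -
  assume "T \<in> Qs n k"
  then have "T \<noteq> {}" "T \<subseteq> {0..n}" unfolding Qs_def by blast+
  moreover then have "finite T" using finite_subset by blast
  ultimately show ?thesis by blast
qed

lemma rT_range: "T \<in> Qs n k \<Longrightarrow> rT T i \<le> n"
  using rT_in[of T i] Qs_fin[of T n k] by auto

lemma rT_simp_op: "T \<in> Qs n k \<Longrightarrow> simp_op n n (rT T)"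
proof -
  assume T: "T \<in> Qs n k"
  have f: "finite T" "T \<noteq> {}" using Qs_fin[OF T] by auto
  show ?thesis unfolding simp_op_def
  proof (intro conjI ballI allI impI)
    fix i show "rT T i \<le> n" by (rule rT_range[OF T])
  next
    fix i j :: nat assume "i \<le> j" then show "rT T i \<le> rT T j" by (rule rT_mono[OF f])
  qed
qed

lemma rT_img: "T \<in> Qs n k \<Longrightarrow> rT T ` {0..n} = T"
proof -
  assume T: "T \<in> Qs n k"
  note f = Qs_fin[OF T]
  have "rT T ` {0..n} \<subseteq> T" using rT_in f by auto
  moreover have "T \<subseteq> rT T ` {0..n}"
  proof
    fix t assume "t \<in> T"
    then have "rT T t = t" "t \<in> {0..n}" using rT_fix f by auto
    then show "t \<in> rT T ` {0..n}" by (metis imageI)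
  qed
  ultimately show ?thesis by blast
qed

lemma Qs_horn: "T \<in> Qs n k \<Longrightarrow> T \<subseteq> {0..n} \<and> insert k T \<noteq> {0..n}"
proof -
  assume T: "T \<in> Qs n k"
  then have a: "T \<subseteq> {0..n}" and b: "\<not> ({0..n} - {k}) \<subseteq> T" unfolding Qs_def by blast+
  have "insert k T \<noteq> {0..n}"
  proof
    assume e: "insert k T = {0..n}"
    have "({0..n} - {k}) \<subseteq> T"
    proof
      fix x assume "x \<in> {0..n} - {k}"
      then have "x \<in> insert k T" "x \<noteq> k" using e by blast+
      then show "x \<in> T" by blast
    qed
    then show False using b by blast
  qed
  then show ?thesis using a by blast
qed

lemma rs_horn:
  assumes T: "T \<in> Qs n k"
  shows "rs n T \<in> cells (horn n k) n"
  unfolding horn_NK NK_cells rs_def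
proof (intro conjI)
  show "\<forall>i j. i \<le> j \<longrightarrow> j \<le> n \<longrightarrow> restrict (rT T) {0..n} i \<le> restrict (rT T) {0..n} j"
    using rT_mono Qs_fin[OF T] by auto
  have "restrict (rT T) {0..n} ` {0..n} = T" using rT_img[OF T] by auto
  then show "restrict (rT T) {0..n} ` {0..n} \<in> {Y. Y \<subseteq> {0..n} \<and> insert k Y \<noteq> {0..n}}"
    using Qs_horn[OF T] by simp
qed auto

lemma rs_comp:
  assumes T: "T \<in> Qs n k" and T': "T' \<in> Qs n k" and sub: "T' \<subseteq> T"
  shows "restrict (rs n T \<circ> rT T') {0..n} = rs n T'"
proof (rule ext)
  fix i
  show "restrict (rs n T \<circ> rT T') {0..n} i = rs n T' i"
  proof (cases "i \<in> {0..n}")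
    case True
    have "rT T' i \<in> T'" using rT_in Qs_fin[OF T'] by auto
    then have "rT T (rT T' i) = rT T' i" "rT T' i \<le> n" using sub rT_fix rT_range[OF T'] by auto
    then show ?thesis using True unfolding rs_def by simp
  next
    case False
    then show ?thesis unfolding rs_def by simp
  qed
qed

lemma rT_fix_chain:
  fixes l :: nat
  assumes "\<forall>i\<in>{0..l}. \<tau> i \<subseteq> T" "\<tau> \<in> extensional {0..l}"
  shows "restrict ((`) (rT T) \<circ> \<tau>) {0..l} = \<tau>"
proof (rule ext)
  fix i
  show "restrict ((`) (rT T) \<circ> \<tau>) {0..l} i = \<tau> i"
  proof (cases "i \<in> {0..l}")
    case True
    then have "\<forall>x\<in>\<tau> i. rT T x = x" using assms rT_fix by blast
    then have "rT T ` \<tau> i = \<tau> i" by simp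
    then show ?thesis using True by simp
  next
    case False
    then have "\<tau> i = undefined" using assms(2) by (simp add: extensional_def)
    then show ?thesis using False by simp
  qed
qed

lemma Delta_simp_op: "\<sigma> \<in> cells (\<Delta> n) m \<Longrightarrow> simp_op m n \<sigma>"
  unfolding Delta_NK NK_cells simp_op_def by auto

lemma horn_Delta: "\<sigma> \<in> cells (horn n k) m \<Longrightarrow> \<sigma> \<in> cells (\<Delta> n) m"
  unfolding horn_NK Delta_NK NK_cells by auto

lemma h_ind:
  assumes h: "smap (horn n k) (Ex C) h"
    and T: "T \<in> Qs n k" and T': "T' \<in> Qs n k" and sub: "T' \<subseteq> T"
    and tau: "\<tau> \<in> cells (sd n) l" and tT: "\<forall>i\<in>{0..l}. \<tau> i \<subseteq> T'"
  shows "h n (rs n T') l \<tau> = h n (rs n T) l \<tau>"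
proof -
  have hc: "rs n T \<in> cells (horn n k) n" by (rule rs_horn[OF T])
  have so: "simp_op n n (rT T')" by (rule rT_simp_op[OF T'])
  have "h n (restrict (rs n T \<circ> rT T') {0..n}) = sact (Ex C) n n (rT T') (h n (rs n T))"
    using h hc so unfolding horn_NK smap_NK by blast
  then have eq: "h n (rs n T') = sact (Ex C) n n (rT T') (h n (rs n T))"
    using rs_comp[OF T T' sub] by simp
  have ext: "\<tau> \<in> extensional {0..l}" using tau unfolding sd_cells by auto
  show ?thesis unfolding eq Ex_sact using tau rT_fix_chain[OF tT ext] by simp
qed


lemma Qs_sub: "T \<in> Qs n k \<Longrightarrow> S \<subseteq> T \<Longrightarrow> S \<noteq> {} \<Longrightarrow> S \<in> Qs n k"
  unfolding Qs_def by blast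

lemma horn_Qs:
  assumes kn: "k \<le> n" and Y: "Y \<subseteq> {0..n}" "Y \<noteq> {}" "insert k Y \<noteq> {0..n}"
  shows "Y \<in> Qs n k"
proof -
  have "\<not> ({0..n} - {k}) \<subseteq> Y"
  proof
    assume a: "({0..n} - {k}) \<subseteq> Y"
    have "insert k Y = {0..n}"
    proof
      show "insert k Y \<subseteq> {0..n}" using Y kn by auto
      show "{0..n} \<subseteq> insert k Y" using a by blast
    qed
    then show False using Y by blast
  qed
  then show ?thesis using Y unfolding Qs_def by blast
qed

lemma NKQ_sd: "\<tau> \<in> cells (NK (\<subseteq>) (Pow (Qs n k))) l \<Longrightarrow> \<tau> \<in> cells (sd n) l"
  unfolding sd_NK NK_cells Qs_def by blast

lemma NKQ_vals: "\<tau> \<in> cells (NK (\<subseteq>) (Pow (Qs n k))) l \<Longrightarrow> i \<le> l \<Longrightarrow> \<tau> i \<in> Qs n k"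
  unfolding NK_cells by auto

lemma NK_mono_le: "\<tau> \<in> cells (NK (\<subseteq>) K) l \<Longrightarrow> i \<le> l \<Longrightarrow> \<tau> i \<subseteq> \<tau> l"
  unfolding NK_cells by auto

lemma kan_from_CLF:
  assumes clf: "CLF (sharp C)"
    and qc: "\<forall>n k. 0 < k \<longrightarrow> k < n \<longrightarrow> extends_along (horn n k) (\<Delta> n) C"
  shows "kan_complex (Ex C)"
  unfolding kan_complex_def
proof (intro conjI allI impI)
  show "is_sset (Ex C)" by (rule is_sset_Ex)
  fix n k :: nat assume n1: "1 \<le> n" and kn: "k \<le> n"
  show "extends_along (horn n k) (\<Delta> n) (Ex C)"
    unfolding extends_along_def
  proof (intro allI impI)
    fix h assume h: "smap (horn n k) (Ex C) h"
    have hcell: "h n (rs n T) \<in> cells (Ex C) n" if "T \<in> Qs n k" for T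
      using h rs_horn[OF that] unfolding smap_def by blast
    have hsd: "smap (sd n) C (h n (rs n T))" if "T \<in> Qs n k" for T
      using hcell[OF that] unfolding Ex_cells by blast
    define \<phi> where "\<phi> l \<tau> = h n (rs n (\<tau> l)) l \<tau>" for l \<tau>
    have phi: "smap (NK (\<subseteq>) (Pow (Qs n k))) C \<phi>"
      unfolding smap_NK
    proof (intro conjI allI impI)
      fix l \<tau> assume t: "\<tau> \<in> cells (NK (\<subseteq>) (Pow (Qs n k))) l"
      have Tl: "\<tau> l \<in> Qs n k" by (rule NKQ_vals[OF t order_refl])
      show "\<phi> l \<tau> \<in> cells C l"
        using hsd[OF Tl] NKQ_sd[OF t] unfolding \<phi>_def smap_def by blast
    next
      fix m l f \<tau> assume f: "simp_op m l f" and t: "\<tau> \<in> cells (NK (\<subseteq>) (Pow (Qs n k))) l"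
      define \<tau>' where "\<tau>' = restrict (\<tau> \<circ> f) {0..m}"
      have Tl: "\<tau> l \<in> Qs n k" by (rule NKQ_vals[OF t order_refl])
      have t': "\<tau>' \<in> cells (NK (\<subseteq>) (Pow (Qs n k))) m"
        unfolding \<tau>'_def by (rule NK_cell_sact[OF t f]) (unfold down_def, blast)
      have Tm: "\<tau>' m \<in> Qs n k" by (rule NKQ_vals[OF t' order_refl])
      have fm: "f m \<le> l" using f by (simp add: simp_op_def)
      have sub: "\<tau>' m \<subseteq> \<tau> l" unfolding \<tau>'_def using NK_mono_le[OF t fm] by simp
      have vals: "\<forall>i\<in>{0..m}. \<tau>' i \<subseteq> \<tau>' m" using NK_mono_le[OF t'] by auto
      have "\<phi> m \<tau>' = h n (rs n (\<tau> l)) m \<tau>'"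
        unfolding \<phi>_def by (rule h_ind[OF h Tl Tm sub NKQ_sd[OF t'] vals])
      also have "\<dots> = sact C m l f (h n (rs n (\<tau> l)) l \<tau>)"
        using hsd[OF Tl] NKQ_sd[OF t] f unfolding smap_def \<tau>'_def sd_sact by blast
      finally show "\<phi> m (restrict (\<tau> \<circ> f) {0..m}) = sact C m l f (\<phi> l \<tau>)"
        unfolding \<tau>'_def \<phi>_def by simp
    qed
    obtain \<Psi> where Psi: "smap (sd n) C \<Psi>"
      and Psia: "\<forall>m \<sigma>. \<sigma> \<in> cells (NK (\<subseteq>) (Pow (Qs n k))) m \<longrightarrow> \<Psi> m \<sigma> = \<phi> m \<sigma>"
      using extend_sd[OF clf qc kn n1 phi] by blast
    define F where "F l \<tau> = (if \<tau> \<in> cells (sd n) l then \<Psi> l \<tau> else undefined)" for l \<tau>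
    have FE: "F \<in> cells (Ex C) n"
      unfolding Ex_cells
    proof
      show "smap (sd n) C F"
      proof (rule smap_cong[OF Psi])
        show "\<forall>m \<sigma>. \<sigma> \<in> cells (sd n) m \<longrightarrow> F m \<sigma> = \<Psi> m \<sigma>" unfolding F_def by simp
        show "\<forall>m na f \<sigma>. simp_op m na f \<longrightarrow> \<sigma> \<in> cells (sd n) na \<longrightarrow> sact (sd n) m na f \<sigma> \<in> cells (sd n) m"
          using sd_sact_cell by simp
      qed
    qed (simp add: F_def)
    define G where "G m \<sigma> = sact (Ex C) m n \<sigma> F" for m \<sigma>
    have Gs: "smap (\<Delta> n) (Ex C) G"
      unfolding smap_def
    proof (intro conjI allI impI)
      fix m \<sigma> assume "\<sigma> \<in> cells (\<Delta> n) m"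
      then show "G m \<sigma> \<in> cells (Ex C) m"
        unfolding G_def by (rule Ex_sact_cell[OF FE Delta_simp_op])
    next
      fix m p f \<sigma> assume f: "simp_op m p f" and s: "\<sigma> \<in> cells (\<Delta> n) p"
      have sp: "simp_op p n \<sigma>" by (rule Delta_simp_op[OF s])
      have c: "restrict (\<sigma> \<circ> f) {0..m} \<in> cells (\<Delta> n) m"
        using s f unfolding Delta_NK by (rule NK_cell_sact) (unfold down_def, blast)
      have sc: "simp_op m n (restrict (\<sigma> \<circ> f) {0..m})" by (rule Delta_simp_op[OF c])
      have iss: "is_sset (Ex C)" by (rule is_sset_Ex)
      have cong: "\<forall>m n f g x. simp_op m n f \<longrightarrow> (\<forall>i\<in>{0..m}. f i = g i) \<longrightarrow> x \<in> cells (Ex C) n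
         \<longrightarrow> sact (Ex C) m n f x = sact (Ex C) m n g x"
        using iss unfolding is_sset_def by blast
      have comp: "\<forall>k m n g f x. simp_op k m g \<longrightarrow> simp_op m n f \<longrightarrow> x \<in> cells (Ex C) n
         \<longrightarrow> sact (Ex C) k m g (sact (Ex C) m n f x) = sact (Ex C) k n (f \<circ> g) x"
        using iss unfolding is_sset_def by blast
      have ag: "\<forall>i\<in>{0..m}. restrict (\<sigma> \<circ> f) {0..m} i = (\<sigma> \<circ> f) i" by simp
      have "sact (Ex C) m n (restrict (\<sigma> \<circ> f) {0..m}) F = sact (Ex C) m n (\<sigma> \<circ> f) F"
        using cong sc ag FE by blast
      also have "\<dots> = sact (Ex C) m p f (sact (Ex C) p n \<sigma> F)"
        using comp f sp FE by metis
      finally show "G m (sact (\<Delta> n) m p f \<sigma>) = sact (Ex C) m p f (G p \<sigma>)"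
        unfolding G_def by (simp add: Delta_NK)
    qed
    have Gh: "G m \<sigma> = h m \<sigma>" if s: "\<sigma> \<in> cells (horn n k) m" for m \<sigma>
    proof (rule ext, rule ext)
      fix l \<tau>
      have hm: "h m \<sigma> \<in> cells (Ex C) m" using h s unfolding smap_def by blast
      show "G m \<sigma> l \<tau> = h m \<sigma> l \<tau>"
      proof (cases "\<tau> \<in> cells (sd m) l")
        case False
        then show ?thesis using hm unfolding G_def Ex_sact Ex_cells by simp
      next
        case True
        have sD: "\<sigma> \<in> cells (\<Delta> n) m" by (rule horn_Delta[OF s])
        have so: "simp_op m n \<sigma>" by (rule Delta_simp_op[OF sD])
        define I where "I = \<sigma> ` {0..m}"
        have Ih: "I \<subseteq> {0..n}" "insert k I \<noteq> {0..n}" using s unfolding horn_NK NK_cells I_def by auto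
        have I: "I \<in> Qs n k" by (rule horn_Qs[OF kn Ih(1) _ Ih(2)]) (auto simp: I_def)
        define \<tau>s where "\<tau>s = restrict ((`) \<sigma> \<circ> \<tau>) {0..l}"
        have ts: "\<tau>s \<in> cells (sd n) l" unfolding \<tau>s_def by (rule sd_image_cell[OF True so])
        have tsv: "\<tau>s i \<subseteq> I \<and> \<tau>s i \<noteq> {}" if il: "i \<le> l" for i
        proof -
          have "\<tau> i \<noteq> {}" "\<tau> i \<subseteq> {0..m}" using True il unfolding sd_cells by auto
          moreover have "\<tau>s i = \<sigma> ` \<tau> i" using il unfolding \<tau>s_def by simp
          ultimately show ?thesis unfolding I_def by (simp add: image_mono)
        qed
        have tsQ: "\<tau>s \<in> cells (NK (\<subseteq>) (Pow (Qs n k))) l"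
        proof -
          have "\<tau>s ` {0..l} \<subseteq> Qs n k"
          proof
            fix S assume "S \<in> \<tau>s ` {0..l}"
            then obtain i where "i \<le> l" "S = \<tau>s i" by auto
            then show "S \<in> Qs n k" using tsv Qs_sub[OF I] by blast
          qed
          then show ?thesis using ts unfolding sd_NK NK_cells by blast
        qed
        have Tl: "\<tau>s l \<in> Qs n k" by (rule NKQ_vals[OF tsQ order_refl])
        have vals: "\<forall>i\<in>{0..l}. \<tau>s i \<subseteq> \<tau>s l" using NK_mono_le[OF tsQ] by auto
        have "\<sigma> \<in> extensional {0..m}" using sD unfolding Delta_NK NK_cells by auto
        then have rsig: "restrict (rs n I \<circ> \<sigma>) {0..m} = \<sigma>"
        proof -
          assume ex: "\<sigma> \<in> extensional {0..m}"
          show ?thesis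
          proof (rule ext)
            fix i show "restrict (rs n I \<circ> \<sigma>) {0..m} i = \<sigma> i"
            proof (cases "i \<in> {0..m}")
              case True
              then have "\<sigma> i \<in> I" unfolding I_def by blast
              then have "rT I (\<sigma> i) = \<sigma> i" "\<sigma> i \<in> {0..n}" using rT_fix Ih(1) by blast+
              then show ?thesis using True unfolding rs_def by simp
            next
              case False then show ?thesis using ex unfolding extensional_def by simp
            qed
          qed
        qed
        have "h m (restrict (rs n I \<circ> \<sigma>) {0..m}) = sact (Ex C) m n \<sigma> (h n (rs n I))"
          using h rs_horn[OF I] so unfolding horn_NK smap_NK by blast
        then have "h m \<sigma> l \<tau> = h n (rs n I) l \<tau>s"
          unfolding rsig Ex_sact \<tau>s_def using True by simp
        also have "\<dots> = h n (rs n (\<tau>s l)) l \<tau>s"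
          using h_ind[OF h I Tl _ ts vals] tsv[of l] by simp
        also have "\<dots> = \<Psi> l \<tau>s" using Psia tsQ unfolding \<phi>_def by simp
        finally show ?thesis unfolding G_def Ex_sact F_def \<tau>s_def using True ts \<tau>s_def by simp
      qed
    qed
    show "\<exists>G. smap (\<Delta> n) (Ex C) G \<and> (\<forall>m x. x \<in> cells (horn n k) m \<longrightarrow> G m x = h m x)"
      using Gs Gh by blast
  qed
qed


lemma wcc_from_qc:
  assumes qc: "quasicategory C"
  shows "weakly_closed_comp (sharp C)"
  unfolding weakly_closed_comp_def
proof (intro allI impI)
  fix h assume h: "smap (horn 2 1) (fst (sharp C)) h"
  have e: "extends_along (horn 2 1) (\<Delta> 2) C" using qc unfolding quasicategory_def by simp
  obtain G where G: "smap (\<Delta> 2) C G" and Ga: "\<forall>m x. x \<in> cells (horn 2 1) m \<longrightarrow> G m x = h m x"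
    using e h unfolding extends_along_def sharp_def by auto
  have "\<forall>e\<in>cells (\<Delta> 2) 1. G 1 e \<in> snd (sharp C)" using G unfolding smap_def sharp_def by simp
  then show "\<exists>G. smap (\<Delta> 2) (fst (sharp C)) G \<and> (\<forall>m x. x \<in> cells (horn 2 1) m \<longrightarrow> G m x = h m x) \<and>
          (\<forall>e\<in>cells (\<Delta> 2) 1. G 1 e \<in> snd (sharp C))"
    using G Ga unfolding sharp_def by auto
qed

lemma Ls_top: "k \<le> n \<Longrightarrow> Ls n k - {{0..n}} \<subseteq> Qs n k"
  by (rule Ls_Qs)

lemma mrlp_from_kan:
  assumes kan: "kan_complex (Ex C)" and n2: "2 \<le> n" and k0: "0 < k" and kn: "k \<le> n"
  shows "mrlp (LJmk n k) (Lmk n k) (sharp C)"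
  unfolding mrlp_def
proof (intro allI impI)
  fix g assume gm: "mmap (LJmk n k) (sharp C) g"
  have g: "smap (NK (\<subseteq>) (Pow (Ls n k - {{0..n}}))) C g"
    using gm unfolding mmap_def LJmk_NK sharp_def by simp
  define h where "h m \<sigma> = (\<lambda>l \<tau>. if \<tau> \<in> cells (sd m) l
      then g l (restrict ((\<lambda>S. insert k (\<sigma> ` S)) \<circ> \<tau>) {0..l}) else undefined)" for m \<sigma>
  have hcell: "h m \<sigma> \<in> cells (Ex C) m" if s: "\<sigma> \<in> cells (horn n k) m" for m \<sigma>
  proof -
    have sD: "\<sigma> \<in> cells (\<Delta> n) m" by (rule horn_Delta[OF s])
    have so: "simp_op m n \<sigma>" by (rule Delta_simp_op[OF sD])
    have "\<sigma> ` {0..m} \<in> {Y. Y \<subseteq> {0..n} \<and> insert k Y \<noteq> {0..n}}"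
      using s unfolding horn_NK NK_cells by blast
    then have Ih0: "\<sigma> ` {0..m} \<subseteq> {0..n} \<and> insert k (\<sigma> ` {0..m}) \<noteq> {0..n}"
      by (rule CollectD)
    note Ih = conjunct1[OF Ih0] conjunct2[OF Ih0]
    let ?p = "\<lambda>S. insert k (\<sigma> ` S)"
    have pv: "?p S \<in> Ls n k - {{0..n}}" if S: "S \<subseteq> {0..m}" for S
    proof -
      have sub: "?p S \<subseteq> insert k (\<sigma> ` {0..m})" using S by blast
      have b: "insert k (\<sigma> ` {0..m}) \<subseteq> {0..n}" using Ih(1) kn by simp
      have a: "?p S \<subseteq> {0..n}" using sub b by (rule subset_trans)
      have "?p S \<noteq> {0..n}"
      proof
        assume "?p S = {0..n}"
        then have "{0..n} \<subseteq> insert k (\<sigma> ` {0..m})" using sub by simp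
        moreover have "insert k (\<sigma> ` {0..m}) \<subseteq> {0..n}" using b .
        ultimately show False using Ih(2) by blast
      qed
      then show ?thesis using a unfolding Ls_def by blast
    qed
    have sm: "smap (NK (\<subseteq>) (Pow {S. S \<noteq> {} \<and> S \<subseteq> {0..m}})) C (\<lambda>l \<tau>. g l (restrict (?p \<circ> \<tau>) {0..l}))"
    proof (rule smap_pb[OF g])
      show "\<forall>Y\<in>Pow {S. S \<noteq> {} \<and> S \<subseteq> {0..m}}. ?p ` Y \<in> Pow (Ls n k - {{0..n}})"
      proof
        fix Y assume Y: "Y \<in> Pow {S. S \<noteq> {} \<and> S \<subseteq> {0..m}}"
        show "?p ` Y \<in> Pow (Ls n k - {{0..n}})"
        proof (rule PowI, rule image_subsetI)
          fix S assume "S \<in> Y"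
          then have "S \<subseteq> {0..m}" using Y by blast
          then show "?p S \<in> Ls n k - {{0..n}}" by (rule pv)
        qed
      qed
      show "\<forall>Y\<in>Pow {S. S \<noteq> {} \<and> S \<subseteq> {0..m}}. \<forall>a\<in>Y. \<forall>b\<in>Y. a \<subseteq> b \<longrightarrow> ?p a \<subseteq> ?p b"
        by (intro ballI impI insert_mono image_mono)
    qed
    have "smap (sd m) C (h m \<sigma>)"
      unfolding sd_NK
    proof (rule smap_cong[OF sm])
      show "\<forall>ma \<tau>. \<tau> \<in> cells (NK (\<subseteq>) (Pow {S. S \<noteq> {} \<and> S \<subseteq> {0..m}})) ma \<longrightarrow>
          h m \<sigma> ma \<tau> = g ma (restrict (?p \<circ> \<tau>) {0..ma})"
      proof (intro allI impI)
        fix ma \<tau> assume "\<tau> \<in> cells (NK (\<subseteq>) (Pow {S. S \<noteq> {} \<and> S \<subseteq> {0..m}})) ma"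
        then have "\<tau> \<in> cells (sd m) ma" unfolding sd_NK .
        then show "h m \<sigma> ma \<tau> = g ma (restrict (?p \<circ> \<tau>) {0..ma})" unfolding h_def by simp
      qed
      show "\<forall>ma na f \<tau>. simp_op ma na f \<longrightarrow> \<tau> \<in> cells (NK (\<subseteq>) (Pow {S. S \<noteq> {} \<and> S \<subseteq> {0..m}})) na \<longrightarrow>
          sact (NK (\<subseteq>) (Pow {S. S \<noteq> {} \<and> S \<subseteq> {0..m}})) ma na f \<tau> \<in> cells (NK (\<subseteq>) (Pow {S. S \<noteq> {} \<and> S \<subseteq> {0..m}})) ma"
      proof (intro allI impI)
        fix ma na f \<tau> assume f: "simp_op ma na f" and t: "\<tau> \<in> cells (NK (\<subseteq>) (Pow {S. S \<noteq> {} \<and> S \<subseteq> {0..m}})) na"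
        have d: "down (Pow {S. S \<noteq> {} \<and> S \<subseteq> {0..m}})" unfolding down_def by blast
        show "sact (NK (\<subseteq>) (Pow {S. S \<noteq> {} \<and> S \<subseteq> {0..m}})) ma na f \<tau> \<in> cells (NK (\<subseteq>) (Pow {S. S \<noteq> {} \<and> S \<subseteq> {0..m}})) ma"
          unfolding NK_sact by (rule NK_cell_sact[OF t f d])
      qed
    qed
    then show ?thesis unfolding Ex_cells h_def by simp
  qed
  have hs: "smap (horn n k) (Ex C) h"
    unfolding smap_def
  proof (intro conjI allI impI)
    fix m \<sigma> assume "\<sigma> \<in> cells (horn n k) m" then show "h m \<sigma> \<in> cells (Ex C) m" by (rule hcell)
  next
    fix m p f \<sigma> assume f: "simp_op m p f" and s: "\<sigma> \<in> cells (horn n k) p"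
    show "h m (sact (horn n k) m p f \<sigma>) = sact (Ex C) m p f (h p \<sigma>)"
    proof (rule ext, rule ext)
      fix l \<tau>
      show "h m (sact (horn n k) m p f \<sigma>) l \<tau> = sact (Ex C) m p f (h p \<sigma>) l \<tau>"
      proof (cases "\<tau> \<in> cells (sd m) l")
        case False then show ?thesis unfolding h_def Ex_sact by simp
      next
        case True
        have c: "restrict ((`) f \<circ> \<tau>) {0..l} \<in> cells (sd p) l" by (rule sd_image_cell[OF True f])
        have tv: "\<tau> i \<subseteq> {0..m}" if "i \<le> l" for i using True that unfolding sd_cells by auto
        have "restrict ((\<lambda>S. insert k (restrict (\<sigma> \<circ> f) {0..m} ` S)) \<circ> \<tau>) {0..l} =
              restrict ((\<lambda>S. insert k (\<sigma> ` S)) \<circ> restrict ((`) f \<circ> \<tau>) {0..l}) {0..l}"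
        proof (rule ext)
          fix i show "restrict ((\<lambda>S. insert k (restrict (\<sigma> \<circ> f) {0..m} ` S)) \<circ> \<tau>) {0..l} i =
              restrict ((\<lambda>S. insert k (\<sigma> ` S)) \<circ> restrict ((`) f \<circ> \<tau>) {0..l}) {0..l} i"
          proof (cases "i \<in> {0..l}")
            case True
            then have "\<tau> i \<subseteq> {0..m}" using tv by simp
            then have "restrict (\<sigma> \<circ> f) {0..m} ` \<tau> i = \<sigma> ` f ` \<tau> i" by (auto simp: image_iff subset_iff)
            then show ?thesis using True by simp
          qed simp
        qed
        then show ?thesis unfolding h_def Ex_sact horn_NK NK_sact using True c by simp
      qed
    qed
  qed
  have extK: "extends_along (horn n k) (\<Delta> n) (Ex C)" using kan n2 kn unfolding kan_complex_def by simp
  obtain G' where G': "smap (\<Delta> n) (Ex C) G'" and G'a: "\<forall>m x. x \<in> cells (horn n k) m \<longrightarrow> G' m x = h m x"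
    using extK[unfolded extends_along_def, rule_format, OF hs] by blast
  define idn where "idn = restrict (\<lambda>i::nat. i) {0..n}"
  have idc: "idn \<in> cells (\<Delta> n) n" unfolding idn_def Delta_NK NK_cells by auto
  define F where "F = G' n idn"
  have FE: "F \<in> cells (Ex C) n" using G' idc unfolding F_def smap_def by blast
  have Fsd: "smap (sd n) C F" using FE unfolding Ex_cells by blast
  have FL: "smap (NK (\<subseteq>) (Pow (Ls n k))) C F"
    using Fsd unfolding sd_NK by (rule smap_sub) (unfold Ls_def, use kn in blast)
  have Fm: "mmap (Lmk n k) (sharp C) F"
    unfolding mmap_def
  proof
    show sm: "smap (fst (Lmk n k)) (fst (sharp C)) F" using FL by (simp add: Lmk_NK sharp_def)
    show "\<forall>e\<in>snd (Lmk n k). F 1 e \<in> snd (sharp C)"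
    proof
      fix e assume "e \<in> snd (Lmk n k)"
      then have "e \<in> cells (fst (Lmk n k)) 1" unfolding Lmk_def Let_def by auto
      then show "F 1 e \<in> snd (sharp C)" using sm unfolding smap_def sharp_def by auto
    qed
  qed
  have agree: "F l \<tau> = g l \<tau>" if t: "\<tau> \<in> cells (fst (LJmk n k)) l" for l \<tau>
  proof -
    have t1: "\<tau> \<in> cells (NK (\<subseteq>) (Pow (Ls n k - {{0..n}}))) l" using t unfolding LJmk_NK .
    have imgL: "\<tau> ` {0..l} \<subseteq> Ls n k - {{0..n}}" using t1 unfolding NK_cells by blast
    have "\<tau> l \<in> \<tau> ` {0..l}" by simp
    then have Tl: "\<tau> l \<in> Ls n k - {{0..n}}" using imgL by (rule subsetD[rotated])
    have TQ: "\<tau> l \<in> Qs n k" using Tl Ls_Qs[OF kn] by blast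
    have vals: "\<forall>i\<in>{0..l}. \<tau> i \<subseteq> \<tau> l" using NK_mono_le[OF t1] by auto
    have ex: "\<tau> \<in> extensional {0..l}" using t1 unfolding NK_cells by auto
    have tsd: "\<tau> \<in> cells (sd n) l"
      using t1 unfolding sd_NK NK_cells Ls_def by blast
    have so: "simp_op n n (rT (\<tau> l))" by (rule rT_simp_op[OF TQ])
    have eqs: "restrict (idn \<circ> rT (\<tau> l)) {0..n} = rs n (\<tau> l)"
      using rT_range[OF TQ] unfolding idn_def rs_def by (auto simp: fun_eq_iff)
    have "G' n (restrict (idn \<circ> rT (\<tau> l)) {0..n}) = sact (Ex C) n n (rT (\<tau> l)) (G' n idn)"
      using G' idc so unfolding smap_def Delta_NK NK_sact by (simp add: Delta_NK)
    then have "G' n (rs n (\<tau> l)) = sact (Ex C) n n (rT (\<tau> l)) F" unfolding eqs F_def .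
    then have "h n (rs n (\<tau> l)) = sact (Ex C) n n (rT (\<tau> l)) F" using G'a rs_horn[OF TQ] by simp
    then have "h n (rs n (\<tau> l)) l \<tau> = F l \<tau>"
      unfolding Ex_sact using tsd rT_fix_chain[OF vals ex] by simp
    moreover have "h n (rs n (\<tau> l)) l \<tau> = g l \<tau>"
    proof -
      have "restrict ((\<lambda>S. insert k (rs n (\<tau> l) ` S)) \<circ> \<tau>) {0..l} = \<tau>"
      proof (rule ext)
        fix i show "restrict ((\<lambda>S. insert k (rs n (\<tau> l) ` S)) \<circ> \<tau>) {0..l} i = \<tau> i"
        proof (cases "i \<in> {0..l}")
          case True
          have "\<tau> i \<in> \<tau> ` {0..l}" using True by simp
          then have ti: "\<tau> i \<in> Ls n k" using imgL by blast
          have "\<forall>x\<in>\<tau> i. rs n (\<tau> l) x = x"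
          proof
            fix x assume "x \<in> \<tau> i"
            then have "x \<in> \<tau> l" "x \<le> n" using vals True ti unfolding Ls_def by auto
            then show "rs n (\<tau> l) x = x" unfolding rs_def using rT_fix by simp
          qed
          then have "rs n (\<tau> l) ` \<tau> i = \<tau> i" by simp
          moreover have "k \<in> \<tau> i" using ti unfolding Ls_def by simp
          ultimately show ?thesis using True by auto
        next
          case False then show ?thesis using ex unfolding extensional_def by simp
        qed
      qed
      then show ?thesis unfolding h_def using tsd by simp
    qed
    ultimately show ?thesis by simp
  qed
  show "\<exists>G. mmap (Lmk n k) (sharp C) G \<and> (\<forall>m x. x \<in> cells (fst (LJmk n k)) m \<longrightarrow> G m x = g m x)"
    using Fm agree by blast
qed

theorem corollary9p7:
  fixes C :: "'a sset"
  assumes "quasicategory C"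
  shows "kan_complex (Ex C) \<longleftrightarrow> CLF (sharp C)"
proof
  assume kan: "kan_complex (Ex C)"
  show "CLF (sharp C)"
    unfolding CLF_def using wcc_from_qc[OF assms] mrlp_from_kan[OF kan] by blast
next
  assume clf: "CLF (sharp C)"
  have qc: "\<forall>n k. 0 < k \<longrightarrow> k < n \<longrightarrow> extends_along (horn n k) (\<Delta> n) C"
    using assms unfolding quasicategory_def by blast
  show "kan_complex (Ex C)" by (rule kan_from_CLF[OF clf qc])
qed

end
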